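(* Fix signs $\epsilon_1,\dots,\epsilon_5\in\{\pm1\}$ and let $\mathcal R$ be a 5-linear operator such that for all $v_1,\dots,v_5$, $$|\widetilde{\mathcal R}(k,\lambda)|\lesssim\frac1{\langle\lambda\rangle^{1+10\delta}}\sum_{\epsilon_1k_1+\dots+\epsilon_5k_5=k}\beta(k,k_1,\dots,k_5)\int_{\mathbb R^5}\prod_{j=1}^5|\widetilde{v_j}(k_j,\lambda_j)|\,d\lambda_1\cdots d\lambda_5,$$ where $\beta$ is supported where $\langle k\rangle\gtrsim\langle k_5\rangle$ and satisfies $$|\beta|\lesssim\langle k^+\rangle^{\sqrt\delta}\frac1{\langle k\rangle\langle\epsilon_3k_3+\epsilon_4k_4\rangle},\qquad|k^+|=\max(|k|,|k_1|,\dots,|k_5|).$$ Then $\|\mathcal R\|_{Z_1}\lesssim\prod_{j=1}^5\|v_j\|_{Y_0}$.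
   Context: $\mathbb T=\mathbb R/2\pi\mathbb Z$, $\langle x\rangle=\sqrt{1+|x|^2}$; space-time Fourier transform $\widehat u(k,\xi)=\frac1{(2\pi)^2}\int e^{-i(kx+\xi t)}u\,dt\,dx$, $\widetilde u(k,\lambda)=\widehat u(k,\lambda-k^2)$. $\|u\|_{X^{s,b}_{p,q}}=\|\langle k\rangle^s\langle\xi+k^2\rangle^b\widehat u(k,\xi)\|_{\ell^p_kL^q_\xi}$. Fix $2\le p_0<\infty$, $0<\delta\ll1$ small depending on $p_0$; $b_1=1-\delta$, $q_0=\frac1{4\delta}$, $\frac1{r_0}=\frac12+\delta$; $Y_0=X^{1/2,1/2}_{p_0,r_0}$, $Z_1=X^{1/2,b_1}_{p_0,q_0}$. Implicit constants in the conclusion depend on $p_0,\delta$ and the constants in the hypotheses. *)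

theory Defs
  imports "HOL-Analysis.Analysis" "HOL-Probability.Probability"
begin

definition jb :: "real \<Rightarrow> real" where
  "jb x = sqrt (1 + x\<^sup>2)"

definition epow :: "ennreal \<Rightarrow> real \<Rightarrow> ennreal" where
  "epow x r = (if x = \<top> then \<top> else ennreal (enn2real x powr r))"

(* Space-time functions on <real> <times> <T> are represented by their space-time Fourier
  transforms u<^sup>^ :: int <Rightarrow> real <Rightarrow> complex, (k,<xi>) <mapsto> u<^sup>^(k,<xi>). *)
definition tilde :: "(int \<Rightarrow> real \<Rightarrow> complex) \<Rightarrow> int \<Rightarrow> real \<Rightarrow> complex" where
  "tilde u k lam = u k (lam - (real_of_int k)\<^sup>2)"

definition Lqk :: "real \<Rightarrow> real \<Rightarrow> real \<Rightarrow> (int \<Rightarrow> real \<Rightarrow> complex) \<Rightarrow> int \<Rightarrow> ennreal" where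
  "Lqk s b q u k =
     epow (\<integral>\<^sup>+ \<xi>. ennreal ((jb (real_of_int k) powr s * jb (\<xi> + (real_of_int k)\<^sup>2) powr b
                              * cmod (u k \<xi>)) powr q) \<partial>lborel) (1/q)"

definition Xnorm :: "real \<Rightarrow> real \<Rightarrow> real \<Rightarrow> real \<Rightarrow> (int \<Rightarrow> real \<Rightarrow> complex) \<Rightarrow> ennreal" where
  "Xnorm s b p q u = epow (\<integral>\<^sup>+ k. epow (Lqk s b q u k) p \<partial>count_space UNIV) (1/p)"

definition multilinear5 ::
  "((nat \<Rightarrow> int \<Rightarrow> real \<Rightarrow> complex) \<Rightarrow> int \<Rightarrow> real \<Rightarrow> complex) \<Rightarrow> bool" where
  "multilinear5 R \<longleftrightarrow>
     (\<forall>v w. (\<forall>j\<in>{1..5}. v j = w j) \<longrightarrow> R v = R w) \<and>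
     (\<forall>j\<in>{1..5}. \<forall>v (a::complex) f g.
        R (v(j := (\<lambda>k \<xi>. a * f k \<xi> + g k \<xi>))) = (\<lambda>k \<xi>. a * R (v(j := f)) k \<xi> + R (v(j := g)) k \<xi>))"

end

theory Submission
  imports Defs
begin

lemma jb_pos[simp]: "jb x > 0"
  unfolding jb_def by (simp add: add_pos_nonneg)

lemma jb_neq0[simp]: "jb x \<noteq> 0"
  using jb_pos[of x] by linarith

lemma jb_nonneg[simp]: "jb x \<ge> 0"
  using jb_pos[of x] by linarith

lemma jb_ge1: "jb x \<ge> 1"
  unfolding jb_def by simp

lemma jb_ge_abs: "\<bar>x\<bar> \<le> jb x"
  unfolding jb_def by (rule real_le_rsqrt) simp

lemma jb_le: "jb x \<le> 1 + \<bar>x\<bar>"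
  unfolding jb_def by (rule real_le_lsqrt) (auto simp: power2_eq_square algebra_simps)

lemma one_plus_abs_le: "1 + \<bar>x\<bar> \<le> sqrt 2 * jb x"
proof -
  have "(1 + \<bar>x\<bar>)\<^sup>2 \<le> 2 * (1 + x\<^sup>2)"
  proof -
    have h: "0 \<le> (\<bar>x\<bar> - 1)\<^sup>2" by simp
    thus ?thesis by (simp add: power2_eq_square algebra_simps)
  qed
  hence "1 + \<bar>x\<bar> \<le> sqrt (2 * (1 + x\<^sup>2))" by (rule real_le_rsqrt)
  thus ?thesis unfolding jb_def by (simp add: real_sqrt_mult[symmetric])
qed

lemma jb_minus[simp]: "jb (- x) = jb x"
  unfolding jb_def by simp

lemma jb_abs[simp]: "jb \<bar>x\<bar> = jb x"
  unfolding jb_def by simp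

lemma continuous_jb: "continuous_on UNIV jb"
  unfolding jb_def by (intro continuous_intros)

lemma jb_measurable[measurable]: "jb \<in> borel_measurable borel"
  by (rule borel_measurable_continuous_onI[OF continuous_jb])

lemma jb_mono_abs: "\<bar>x\<bar> \<le> \<bar>y\<bar> \<Longrightarrow> jb x \<le> jb y"
  unfolding jb_def by (simp add: abs_le_square_iff)

lemma epow_ennreal: "x \<ge> 0 \<Longrightarrow> epow (ennreal x) r = ennreal (x powr r)"
  unfolding epow_def by simp

lemma epow_top[simp]: "epow \<top> r = \<top>"
  unfolding epow_def by simp

lemma epow_0[simp]: "epow 0 r = 0"
  unfolding epow_def by simp

lemma epow_eq_top_iff: "epow x r = \<top> \<longleftrightarrow> x = \<top>"
  unfolding epow_def by simp

lemma epow_eq_0_iff: "epow x r = 0 \<longleftrightarrow> x = 0"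
  unfolding epow_def by (cases x) (auto simp: ennreal_eq_0_iff)

lemma epow_mono: assumes "r > 0" "x \<le> y" shows "epow x r \<le> epow y r"
proof (cases "y = \<top>")
  case True thus ?thesis by simp
next
  case False
  then obtain b where b: "y = ennreal b" "b \<ge> 0" by (cases y) auto
  with assms obtain a where a: "x = ennreal a" "a \<ge> 0" "a \<le> b"
    by (cases x) (auto simp: top_unique)
  show ?thesis using a b assms by (simp add: epow_ennreal powr_mono2)
qed

lemma epow_mult: assumes "r > 0" shows "epow (x * y) r = epow x r * epow y r"
proof (cases "x = 0 \<or> y = 0")
  case True thus ?thesis by auto
next
  case False
  show ?thesis
  proof (cases "x = \<top> \<or> y = \<top>")
    case True thus ?thesis using False
      by (auto simp: ennreal_mult_top ennreal_top_mult epow_eq_0_iff)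
  next
    case F2: False
    then obtain a b where ab: "x = ennreal a" "y = ennreal b" "a \<ge> 0" "b \<ge> 0"
      by (cases x; cases y) auto
    thus ?thesis by (simp add: epow_ennreal ennreal_mult[symmetric] powr_mult)
  qed
qed

lemma epow_epow: assumes "r > 0" shows "epow (epow x r) s = epow x (r * s)"
  by (cases x) (auto simp: epow_ennreal powr_powr)

lemma epow_1[simp]: "epow x 1 = x"
  by (cases x) (auto simp: epow_ennreal)

lemma epow_ennreal_mult: "c \<ge> 0 \<Longrightarrow> r > 0 \<Longrightarrow> epow (ennreal c * x) r = ennreal (c powr r) * epow x r"
  by (simp add: epow_mult epow_ennreal)


lemma young_scaled:
  fixes p q a b x y :: real
  assumes p: "p > 1" and q: "1/p + 1/q = 1" and a: "a > 0" and b: "b > 0"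
    and x: "x \<ge> 0" and y: "y \<ge> 0"
  shows "x * y \<le> a powr (1/p) * b powr (1/q) * (x powr p / (p * a) + y powr q / (q * b))"
proof -
  have q1: "q > 1" using p q
    by (smt (verit, best) divide_less_eq_1_pos divide_nonneg_nonneg less_divide_eq_1 zero_less_divide_1_iff)
  define X where "X = x / a powr (1/p)"
  define Y where "Y = y / b powr (1/q)"
  have X0: "X \<ge> 0" "Y \<ge> 0" using x y unfolding X_def Y_def by auto
  have "X * Y \<le> X powr p / p + Y powr q / q"
    by (rule Youngs_inequality[OF p q1 q X0])
  moreover have "X powr p = x powr p / a"
    unfolding X_def using a p x by (simp add: powr_divide powr_powr)
  moreover have "Y powr q = y powr q / b"
    unfolding Y_def using b q1 y by (simp add: powr_divide powr_powr)
  moreover have "x * y = a powr (1/p) * b powr (1/q) * (X * Y)"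
    unfolding X_def Y_def using a b by (simp add: field_simps)
  ultimately have "x * y \<le> a powr (1/p) * b powr (1/q) * (x powr p / a / p + y powr q / b / q)"
    using a b by (simp add: mult_left_mono)
  thus ?thesis by (simp add: field_simps)
qed

lemma holder:
  fixes f g :: "'a \<Rightarrow> real"
  assumes p: "p > 1" and q: "1/p + 1/q = 1"
    and fm[measurable]: "f \<in> borel_measurable M" and gm[measurable]: "g \<in> borel_measurable M"
    and f0: "\<And>x. 0 \<le> f x" and g0: "\<And>x. 0 \<le> g x"
  shows "(\<integral>\<^sup>+x. ennreal (f x * g x) \<partial>M) \<le>
     epow (\<integral>\<^sup>+x. ennreal (f x powr p) \<partial>M) (1/p) * epow (\<integral>\<^sup>+x. ennreal (g x powr q) \<partial>M) (1/q)"
proof -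
  have q1: "q > 1" using p q
    by (smt (verit, best) divide_less_eq_1_pos divide_nonneg_nonneg less_divide_eq_1 zero_less_divide_1_iff)
  define A where "A = (\<integral>\<^sup>+x. ennreal (f x powr p) \<partial>M)"
  define B where "B = (\<integral>\<^sup>+x. ennreal (g x powr q) \<partial>M)"
  show ?thesis
  proof (cases "A = 0 \<or> B = 0")
    case True
    have "AE x in M. f x * g x = 0"
    proof (cases "A = 0")
      case True
      hence "AE x in M. ennreal (f x powr p) = 0" unfolding A_def
        by (subst nn_integral_0_iff_AE[symmetric]) auto
      thus ?thesis by eventually_elim (auto simp: f0)
    next
      case False
      hence "B = 0" using \<open>A = 0 \<or> B = 0\<close> by auto
      hence "AE x in M. ennreal (g x powr q) = 0" unfolding B_def
        by (subst nn_integral_0_iff_AE[symmetric]) auto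
      thus ?thesis by eventually_elim (auto simp: g0)
    qed
    hence "(\<integral>\<^sup>+x. ennreal (f x * g x) \<partial>M) = (\<integral>\<^sup>+x. 0 \<partial>M)"
      by (intro nn_integral_cong_AE) auto
    thus ?thesis by simp
  next
    case False
    hence A0: "A \<noteq> 0" and B0: "B \<noteq> 0" by auto
    show ?thesis
    proof (cases "A = \<top> \<or> B = \<top>")
      case True
      hence "epow A (1/p) * epow B (1/q) = \<top>"
        using A0 B0 by (auto simp: epow_eq_0_iff ennreal_mult_eq_top_iff)
      thus ?thesis unfolding A_def B_def by simp
    next
      case False
      then obtain a b where ab: "A = ennreal a" "B = ennreal b" "a \<ge> 0" "b \<ge> 0"
        by (cases A; cases B) auto
      have a: "a > 0" using ab A0 by auto
      have b: "b > 0" using ab B0 by auto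
      define c where "c = a powr (1/p) * b powr (1/q)"
      have c0: "c \<ge> 0" unfolding c_def by simp
      have "(\<integral>\<^sup>+x. ennreal (f x * g x) \<partial>M) \<le>
            (\<integral>\<^sup>+x. ennreal c * (ennreal (f x powr p) * ennreal (1 / (p * a))
                   + ennreal (g x powr q) * ennreal (1 / (q * b))) \<partial>M)"
      proof (intro nn_integral_mono)
        fix x
        have "f x * g x \<le> c * (f x powr p / (p * a) + g x powr q / (q * b))"
          unfolding c_def by (rule young_scaled[OF p q a b f0 g0])
        hence "ennreal (f x * g x) \<le> ennreal (c * (f x powr p * (1 / (p * a)) + g x powr q * (1 / (q * b))))"
          by (intro ennreal_leI) simp
        also have "\<dots> = ennreal c * (ennreal (f x powr p) * ennreal (1 / (p * a))
                   + ennreal (g x powr q) * ennreal (1 / (q * b)))"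
          using c0 a b p q1
          by (simp add: ennreal_mult[symmetric] ennreal_plus[symmetric] del: ennreal_plus)
        finally show "ennreal (f x * g x) \<le> \<dots>" .
      qed
      also have "\<dots> = ennreal c * (A * ennreal (1 / (p * a)) + B * ennreal (1 / (q * b)))"
        unfolding A_def B_def
        by (simp add: nn_integral_cmult nn_integral_add nn_integral_multc)
      also have "\<dots> = ennreal c * ennreal (1/p + 1/q)"
        using a b p q1 unfolding ab
        by (simp add: ennreal_mult[symmetric] ennreal_plus[symmetric] del: ennreal_plus)
      also have "\<dots> = ennreal c" using q by simp
      also have "\<dots> = epow A (1/p) * epow B (1/q)"
        unfolding ab c_def using ab by (simp add: epow_ennreal ennreal_mult)
      finally show ?thesis unfolding A_def B_def .
    qed
  qed
qed


lemma int_sum_split: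
  fixes f :: "int \<Rightarrow> ennreal"
  shows "(\<integral>\<^sup>+n. f n \<partial>count_space UNIV) =
     (\<integral>\<^sup>+m. f (int m) \<partial>count_space UNIV) + (\<integral>\<^sup>+m. f (- int (Suc m)) \<partial>count_space UNIV)"
proof -
  have "(\<integral>\<^sup>+n. f n \<partial>count_space UNIV) =
        (\<integral>\<^sup>+n. f n * indicator {0..} n + f n * indicator {..<0} n \<partial>count_space UNIV)"
    by (intro nn_integral_cong) (auto simp: indicator_def)
  also have "\<dots> = (\<integral>\<^sup>+n. f n * indicator {0..} n \<partial>count_space UNIV) +
                   (\<integral>\<^sup>+n. f n * indicator {..<0} n \<partial>count_space UNIV)"
    by (rule nn_integral_add) auto
  also have "(\<integral>\<^sup>+n. f n * indicator {0..} n \<partial>count_space UNIV) = (\<integral>\<^sup>+n. f n \<partial>count_space {0..})"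
    by (simp add: nn_integral_count_space_indicator)
  also have "\<dots> = (\<integral>\<^sup>+m. f (int m) \<partial>count_space UNIV)"
  proof -
    have "bij_betw int UNIV {0::int..}"
      by (auto simp: bij_betw_def inj_on_def image_def intro!: exI[of _ "nat x" for x])
    thus ?thesis by (rule nn_integral_bij_count_space[symmetric])
  qed
  also have "(\<integral>\<^sup>+n. f n * indicator {..<0} n \<partial>count_space UNIV) = (\<integral>\<^sup>+n. f n \<partial>count_space {..<0})"
    by (simp add: nn_integral_count_space_indicator)
  also have "\<dots> = (\<integral>\<^sup>+m. f (- int (Suc m)) \<partial>count_space UNIV)"
  proof -
    have "bij_betw (\<lambda>m. - int (Suc m)) UNIV {..<0::int}"
      unfolding bij_betw_def inj_on_def image_def
      by (auto intro!: exI[of _ "nat (- x - 1)" for x])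
    thus ?thesis by (rule nn_integral_bij_count_space[symmetric])
  qed
  finally show ?thesis .
qed

lemma zsum_finite:
  assumes s: "s > 1"
  shows "(\<integral>\<^sup>+n. ennreal (jb (real_of_int n) powr (- s)) \<partial>count_space UNIV) < \<top>"
proof -
  define h where "h m = sqrt 2 powr s * real (Suc m) powr (- s)" for m :: nat
  have hs: "summable h"
  proof -
    have "summable (\<lambda>m. real m powr (- s))" using s by (subst summable_real_powr_iff) auto
    hence "summable (\<lambda>m. real (Suc m) powr (- s))"
      using summable_Suc_iff[of "\<lambda>m. real m powr (- s)"] by simp
    thus ?thesis unfolding h_def by (rule summable_mult)
  qed
  have bound: "jb (real_of_int n) powr (- s) \<le> h (nat \<bar>n\<bar>)" for n :: int
  proof -
    have "real (Suc (nat \<bar>n\<bar>)) = 1 + \<bar>real_of_int n\<bar>" by simp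
    hence le: "real (Suc (nat \<bar>n\<bar>)) \<le> sqrt 2 * jb (real_of_int n)"
      using one_plus_abs_le by simp
    have "real (Suc (nat \<bar>n\<bar>)) powr s \<le> (sqrt 2 * jb (real_of_int n)) powr s"
      using le s by (intro powr_mono2) auto
    hence "real (Suc (nat \<bar>n\<bar>)) powr s \<le> sqrt 2 powr s * jb (real_of_int n) powr s"
      by (simp add: powr_mult)
    moreover have "jb (real_of_int n) powr s > 0" using jb_pos by simp
    moreover have "real (Suc (nat \<bar>n\<bar>)) powr s > 0" by simp
    ultimately show ?thesis unfolding h_def
      by (simp add: powr_minus field_simps)
  qed
  have "(\<integral>\<^sup>+n. ennreal (jb (real_of_int n) powr (- s)) \<partial>count_space UNIV)
      \<le> (\<integral>\<^sup>+n. ennreal (h (nat \<bar>n\<bar>)) \<partial>count_space UNIV)"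
    by (intro nn_integral_mono ennreal_leI bound)
  also have "\<dots> = (\<integral>\<^sup>+m. ennreal (h m) \<partial>count_space UNIV) + (\<integral>\<^sup>+m. ennreal (h (Suc m)) \<partial>count_space UNIV)"
  proof -
    have "\<And>m. nat (int m + 1) = Suc m" by simp
    thus ?thesis by (subst int_sum_split) simp
  qed
  also have "\<dots> = (\<Sum>m. ennreal (h m)) + (\<Sum>m. ennreal (h (Suc m)))"
    by (simp add: nn_integral_count_space_nat)
  also have "\<dots> < \<top>"
  proof -
    have h0: "\<And>m. h m \<ge> 0" unfolding h_def by simp
    have "(\<Sum>m. ennreal (h m)) \<noteq> \<top>" by (rule ennreal_suminf_neq_top[OF hs h0])
    moreover have "(\<Sum>m. ennreal (h (Suc m))) \<noteq> \<top>"
      by (rule ennreal_suminf_neq_top) (use hs h0 in \<open>auto simp: summable_Suc_iff\<close>)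
    ultimately show ?thesis by (simp add: less_top)
  qed
  finally show ?thesis .
qed

lemma jb_floor_le: "jb (real_of_int \<lfloor>x\<rfloor>) \<le> 2 * sqrt 2 * jb x"
proof -
  have "jb (real_of_int \<lfloor>x\<rfloor>) \<le> 1 + \<bar>real_of_int \<lfloor>x\<rfloor>\<bar>" by (rule jb_le)
  also have "\<dots> \<le> 2 * (1 + \<bar>x\<bar>)"
    using floor_le_iff[of x] le_floor_iff[of _ x] by (smt (verit) of_int_floor_le real_of_int_floor_gt_diff_one)
  also have "\<dots> \<le> 2 * (sqrt 2 * jb x)" using one_plus_abs_le[of x] by simp
  finally show ?thesis by simp
qed

lemma lint_finite:
  assumes s: "s > 1"
  shows "(\<integral>\<^sup>+x. ennreal (jb x powr (- s)) \<partial>lborel) < \<top>"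
proof -
  define K where "K = (2 * sqrt 2) powr s"
  have K0: "K \<ge> 0" unfolding K_def by simp
  have pw: "jb x powr (- s) \<le> K * jb (real_of_int \<lfloor>x\<rfloor>) powr (- s)" for x
  proof -
    have "jb (real_of_int \<lfloor>x\<rfloor>) powr s \<le> (2 * sqrt 2 * jb x) powr s"
      using jb_floor_le[of x] s jb_pos by (intro powr_mono2) (auto intro: less_imp_le)
    hence "jb (real_of_int \<lfloor>x\<rfloor>) powr s \<le> K * jb x powr s"
      unfolding K_def by (simp add: powr_mult)
    moreover have "jb (real_of_int \<lfloor>x\<rfloor>) powr s > 0" "jb x powr s > 0" using jb_pos by auto
    ultimately show ?thesis by (simp add: powr_minus field_simps)
  qed
  have "(\<integral>\<^sup>+x. ennreal (jb x powr (- s)) \<partial>lborel)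
     \<le> (\<integral>\<^sup>+x. (\<integral>\<^sup>+n. ennreal (K * jb (real_of_int n) powr (- s)) *
             indicator {real_of_int n..<real_of_int n + 1} x \<partial>count_space UNIV) \<partial>lborel)"
  proof (intro nn_integral_mono)
    fix x
    have "ennreal (jb x powr (- s)) \<le> ennreal (K * jb (real_of_int \<lfloor>x\<rfloor>) powr (- s))"
      by (intro ennreal_leI pw)
    also have "\<dots> = (\<integral>\<^sup>+n. ennreal (K * jb (real_of_int n) powr (- s)) *
             indicator {real_of_int n..<real_of_int n + 1} x \<partial>count_space {\<lfloor>x\<rfloor>})"
      by (simp add: nn_integral_count_space_finite indicator_def)
    also have "\<dots> \<le> (\<integral>\<^sup>+n. ennreal (K * jb (real_of_int n) powr (- s)) *
             indicator {real_of_int n..<real_of_int n + 1} x \<partial>count_space UNIV)"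
      by (subst nn_integral_count_space_indicator) (auto intro!: nn_integral_mono simp: indicator_def)
    finally show "ennreal (jb x powr (- s)) \<le> \<dots>" .
  qed
  also have "\<dots> = (\<integral>\<^sup>+n. (\<integral>\<^sup>+x. ennreal (K * jb (real_of_int n) powr (- s)) *
             indicator {real_of_int n..<real_of_int n + 1} x \<partial>lborel) \<partial>count_space UNIV)"
    by (rule nn_integral_count_space_nn_integral) auto
  also have "\<dots> = (\<integral>\<^sup>+n. ennreal (K * jb (real_of_int n) powr (- s)) \<partial>count_space UNIV)"
    by (intro nn_integral_cong) (simp add: nn_integral_cmult)
  also have "\<dots> = ennreal K * (\<integral>\<^sup>+n. ennreal (jb (real_of_int n) powr (- s)) \<partial>count_space UNIV)"
    using K0 by (simp add: ennreal_mult nn_integral_cmult)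
  also have "\<dots> < \<top>" using zsum_finite[OF s] by (simp add: ennreal_mult_less_top)
  finally show ?thesis .
qed

lemma lborel_translate:
  fixes f :: "real \<Rightarrow> ennreal"
  assumes [measurable]: "f \<in> borel_measurable borel"
  shows "(\<integral>\<^sup>+x. f (x + c) \<partial>lborel) = (\<integral>\<^sup>+x. f x \<partial>lborel)"
  using nn_integral_real_affine[of f 1 c] by (simp add: add.commute)

lemma nn_integral_prod_count:
  fixes f :: "'a \<Rightarrow> ennreal" and g :: "'b \<Rightarrow> ennreal"
  shows "(\<integral>\<^sup>+z. f (fst z) * g (snd z) \<partial>count_space UNIV) =
         (\<integral>\<^sup>+x. f x \<partial>count_space UNIV) * (\<integral>\<^sup>+y. g y \<partial>count_space UNIV)"
proof -
  have "(\<integral>\<^sup>+z. f (fst z) * g (snd z) \<partial>count_space UNIV) =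
        (\<integral>\<^sup>+x. (\<integral>\<^sup>+y. f x * g y \<partial>count_space UNIV) \<partial>count_space UNIV)"
    using nn_integral_fst_count_space[of "\<lambda>z. f (fst z) * g (snd z)"] by simp
  also have "\<dots> = (\<integral>\<^sup>+x. f x * (\<integral>\<^sup>+y. g y \<partial>count_space UNIV) \<partial>count_space UNIV)"
    by (simp add: nn_integral_cmult)
  also have "\<dots> = (\<integral>\<^sup>+x. f x \<partial>count_space UNIV) * (\<integral>\<^sup>+y. g y \<partial>count_space UNIV)"
    by (simp add: nn_integral_multc)
  finally show ?thesis .
qed

lemma nn_integral_inj_le:
  fixes F :: "'a \<Rightarrow> 'b"
  assumes "inj_on F A"
  shows "(\<integral>\<^sup>+x. g (F x) \<partial>count_space A) \<le> (\<integral>\<^sup>+y. g y \<partial>count_space UNIV)"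
proof -
  have "(\<integral>\<^sup>+x. g (F x) \<partial>count_space A) = (\<integral>\<^sup>+y. g y \<partial>count_space (F ` A))"
    using assms by (intro nn_integral_bij_count_space) (simp add: bij_betw_def)
  also have "\<dots> \<le> (\<integral>\<^sup>+y. g y \<partial>count_space UNIV)"
    by (subst nn_integral_count_space_indicator) (auto intro!: nn_integral_mono simp: indicator_def)
  finally show ?thesis .
qed


definition SetK :: "(nat \<Rightarrow> int) \<Rightarrow> int \<Rightarrow> (nat \<Rightarrow> int) set" where
  "SetK \<epsilon> k = {K. (\<forall>j. j \<notin> {1..5} \<longrightarrow> K j = 0) \<and> (\<Sum>j\<in>{1..5}. \<epsilon> j * K j) = k}"

definition SetA :: "(nat \<Rightarrow> int) set" where
  "SetA = {K. \<forall>j. j \<notin> {1..5} \<longrightarrow> K j = 0}"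

definition Vw :: "real \<Rightarrow> (nat \<Rightarrow> int) \<Rightarrow> (nat \<Rightarrow> int) \<Rightarrow> real" where
  "Vw \<sigma> \<epsilon> K = jb (of_int (K 5)) powr (\<sigma> - 1) * jb (of_int (\<epsilon> 3 * K 3 + \<epsilon> 4 * K 4)) powr (-1) *
     (jb (of_int (K 1)) powr (\<sigma> - 1/2) * jb (of_int (K 2)) powr (\<sigma> - 1/2) *
      jb (of_int (K 3)) powr (\<sigma> - 1/2) * jb (of_int (K 4)) powr (\<sigma> - 1/2))"

definition Zs :: "real \<Rightarrow> real" where
  "Zs s = enn2real (\<integral>\<^sup>+n. ennreal (jb (real_of_int n) powr (- s)) \<partial>count_space UNIV)"

lemma Zs_eq: "s > 1 \<Longrightarrow> ennreal (Zs s) = (\<integral>\<^sup>+n. ennreal (jb (real_of_int n) powr (- s)) \<partial>count_space UNIV)"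
  unfolding Zs_def using zsum_finite[of s] by (simp add: less_top)

lemma Zs_nonneg: "Zs s \<ge> 0" unfolding Zs_def by simp

lemma five_set: "{1..5::nat} = {1,2,3,4,5}" by auto

lemma sum5: "(\<Sum>j\<in>{1..5::nat}. f j) = f 1 + f 2 + f 3 + f 4 + f 5"
  unfolding five_set by (simp add: algebra_simps)

lemma prod5: "(\<Prod>j\<in>{1..5::nat}. f j) = f 1 * (f 2 * (f 3 * (f 4 * f 5)))"
  unfolding five_set by (simp add: algebra_simps)

lemma prod4_count:
  fixes f1 :: "'a \<Rightarrow> ennreal" and f2 :: "'b \<Rightarrow> ennreal" and f3 :: "'c \<Rightarrow> ennreal" and f4 :: "'d \<Rightarrow> ennreal"
  shows "(\<integral>\<^sup>+z. f1 (fst z) * (f2 (fst (snd z)) * (f3 (fst (snd (snd z))) * f4 (snd (snd (snd z))))) \<partial>count_space UNIV)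
    = (\<integral>\<^sup>+x. f1 x \<partial>count_space UNIV) * ((\<integral>\<^sup>+x. f2 x \<partial>count_space UNIV) *
       ((\<integral>\<^sup>+x. f3 x \<partial>count_space UNIV) * (\<integral>\<^sup>+x. f4 x \<partial>count_space UNIV)))"
proof -
  have a: "(\<integral>\<^sup>+z. f3 (fst z) * f4 (snd z) \<partial>count_space UNIV) =
     (\<integral>\<^sup>+x. f3 x \<partial>count_space UNIV) * (\<integral>\<^sup>+x. f4 x \<partial>count_space UNIV)"
    by (rule nn_integral_prod_count)
  have b: "(\<integral>\<^sup>+z. f2 (fst z) * (f3 (fst (snd z)) * f4 (snd (snd z))) \<partial>count_space UNIV) =
     (\<integral>\<^sup>+x. f2 x \<partial>count_space UNIV) * (\<integral>\<^sup>+z. f3 (fst z) * f4 (snd z) \<partial>count_space UNIV)"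
    using nn_integral_prod_count[of f2 "\<lambda>z. f3 (fst z) * f4 (snd z)"] by simp
  show ?thesis
    using nn_integral_prod_count[of f1 "\<lambda>z. f2 (fst z) * (f3 (fst (snd z)) * f4 (snd (snd z)))"]
    by (simp add: a b)
qed

lemma prod5_count:
  fixes f1 f2 f3 f4 f5 :: "int \<Rightarrow> ennreal"
  shows "(\<integral>\<^sup>+z. f1 (fst z) * (f2 (fst (snd z)) * (f3 (fst (snd (snd z))) * (f4 (fst (snd (snd (snd z)))) * f5 (snd (snd (snd (snd z))))))) \<partial>count_space UNIV)
    = (\<integral>\<^sup>+x. f1 x \<partial>count_space UNIV) * ((\<integral>\<^sup>+x. f2 x \<partial>count_space UNIV) *
       ((\<integral>\<^sup>+x. f3 x \<partial>count_space UNIV) * ((\<integral>\<^sup>+x. f4 x \<partial>count_space UNIV) * (\<integral>\<^sup>+x. f5 x \<partial>count_space UNIV))))"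
proof -
  have a: "(\<integral>\<^sup>+z. f2 (fst z) * (f3 (fst (snd z)) * (f4 (fst (snd (snd z))) * f5 (snd (snd (snd z))))) \<partial>count_space UNIV)
    = (\<integral>\<^sup>+x. f2 x \<partial>count_space UNIV) * ((\<integral>\<^sup>+x. f3 x \<partial>count_space UNIV) *
       ((\<integral>\<^sup>+x. f4 x \<partial>count_space UNIV) * (\<integral>\<^sup>+x. f5 x \<partial>count_space UNIV)))"
    by (rule prod4_count)
  show ?thesis
    using nn_integral_prod_count[of f1 "\<lambda>z. f2 (fst z) * (f3 (fst (snd z)) * (f4 (fst (snd (snd z))) * f5 (snd (snd (snd z)))))"]
    by (simp add: a)
qed

lemma SetK_inj:
  assumes i: "i \<in> {1,2}" and l: "l \<in> {3,4}" and eps: "\<forall>j\<in>{1..5}. \<epsilon> j \<noteq> 0"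
  shows "inj_on (\<lambda>K. (K i, K l, \<epsilon> 3 * K 3 + \<epsilon> 4 * K 4, K 5)) (SetK \<epsilon> k)"
proof (rule inj_onI)
  fix K K' assume K: "K \<in> SetK \<epsilon> k" and K': "K' \<in> SetK \<epsilon> k"
    and eq: "(K i, K l, \<epsilon> 3 * K 3 + \<epsilon> 4 * K 4, K 5) = (K' i, K' l, \<epsilon> 3 * K' 3 + \<epsilon> 4 * K' 4, K' 5)"
  have out: "K j = 0" "K' j = 0" if "j \<notin> {1..5}" for j using K K' that unfolding SetK_def by auto
  have s: "\<epsilon> 1 * K 1 + \<epsilon> 2 * K 2 + \<epsilon> 3 * K 3 + \<epsilon> 4 * K 4 + \<epsilon> 5 * K 5 =
           \<epsilon> 1 * K' 1 + \<epsilon> 2 * K' 2 + \<epsilon> 3 * K' 3 + \<epsilon> 4 * K' 4 + \<epsilon> 5 * K' 5"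
    using K K' unfolding SetK_def mem_Collect_eq sum5 by simp
  have e: "\<epsilon> 1 \<noteq> 0" "\<epsilon> 2 \<noteq> 0" "\<epsilon> 3 \<noteq> 0" "\<epsilon> 4 \<noteq> 0" using eps by auto
  have m: "\<epsilon> 3 * K 3 + \<epsilon> 4 * K 4 = \<epsilon> 3 * K' 3 + \<epsilon> 4 * K' 4" and k5: "K 5 = K' 5"
    and ki: "K i = K' i" and kl: "K l = K' l" using eq by auto
  have k34: "K 3 = K' 3 \<and> K 4 = K' 4"
  proof (cases "l = 3")
    case True
    with kl m have "\<epsilon> 4 * K 4 = \<epsilon> 4 * K' 4" by simp
    with e True kl show ?thesis by simp
  next
    case False
    with l have "l = 4" by auto
    with kl m have "\<epsilon> 3 * K 3 = \<epsilon> 3 * K' 3" by simp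
    with e \<open>l = 4\<close> kl show ?thesis by simp
  qed
  have k12: "K 1 = K' 1 \<and> K 2 = K' 2"
  proof (cases "i = 1")
    case True
    with ki s k34 k5 have "\<epsilon> 2 * K 2 = \<epsilon> 2 * K' 2" by simp
    with e True ki show ?thesis by simp
  next
    case False
    with i have "i = 2" by auto
    with ki s k34 k5 have "\<epsilon> 1 * K 1 = \<epsilon> 1 * K' 1" by simp
    with e \<open>i = 2\<close> ki show ?thesis by simp
  qed
  show "K = K'"
  proof
    fix j
    show "K j = K' j"
    proof (cases "j \<in> {1..5}")
      case True
      hence "j = 1 \<or> j = 2 \<or> j = 3 \<or> j = 4 \<or> j = 5" by auto
      thus ?thesis using k12 k34 k5 by auto
    next
      case False
      thus ?thesis using out by simp
    qed
  qed
qed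

lemma term_bound:
  assumes i: "i \<in> {1,2}" and l: "l \<in> {3,4}" and eps: "\<forall>j\<in>{1..5}. \<epsilon> j \<noteq> 0"
    and nn: "\<And>n. \<phi> n \<ge> 0" "\<And>n. \<phi>' n \<ge> 0" "\<And>n. \<psi> n \<ge> 0" "\<And>n. w5 n \<ge> 0"
  shows "(\<integral>\<^sup>+K. ennreal (\<phi> (K i) * \<phi>' (K l) * \<psi> (\<epsilon> 3 * K 3 + \<epsilon> 4 * K 4) * w5 (K 5)) \<partial>count_space (SetK \<epsilon> k))
     \<le> (\<integral>\<^sup>+x. ennreal (\<phi> x) \<partial>count_space UNIV) * ((\<integral>\<^sup>+x. ennreal (\<phi>' x) \<partial>count_space UNIV) *
       ((\<integral>\<^sup>+x. ennreal (\<psi> x) \<partial>count_space UNIV) * (\<integral>\<^sup>+x. ennreal (w5 x) \<partial>count_space UNIV)))"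
proof -
  define g where "g z = ennreal (\<phi> (fst z)) * (ennreal (\<phi>' (fst (snd z))) * (ennreal (\<psi> (fst (snd (snd z)))) * ennreal (w5 (snd (snd (snd z))))))"
    for z :: "int \<times> int \<times> int \<times> int"
  have "(\<integral>\<^sup>+K. ennreal (\<phi> (K i) * \<phi>' (K l) * \<psi> (\<epsilon> 3 * K 3 + \<epsilon> 4 * K 4) * w5 (K 5)) \<partial>count_space (SetK \<epsilon> k))
     = (\<integral>\<^sup>+K. g (K i, K l, \<epsilon> 3 * K 3 + \<epsilon> 4 * K 4, K 5) \<partial>count_space (SetK \<epsilon> k))"
    unfolding g_def using nn by (intro nn_integral_cong) (simp add: ennreal_mult mult.assoc)
  also have "\<dots> \<le> (\<integral>\<^sup>+z. g z \<partial>count_space UNIV)"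
    by (rule nn_integral_inj_le[OF SetK_inj[OF i l eps]])
  also have "\<dots> = (\<integral>\<^sup>+x. ennreal (\<phi> x) \<partial>count_space UNIV) * ((\<integral>\<^sup>+x. ennreal (\<phi>' x) \<partial>count_space UNIV) *
       ((\<integral>\<^sup>+x. ennreal (\<psi> x) \<partial>count_space UNIV) * (\<integral>\<^sup>+x. ennreal (w5 x) \<partial>count_space UNIV)))"
    unfolding g_def by (rule prod4_count)
  finally show ?thesis .
qed

lemma prod_neg_le: fixes u v e :: real assumes "u > 0" "v > 0" "e \<ge> 0"
  shows "u powr (- e) * v powr (- e) \<le> u powr (- (2 * e)) + v powr (- (2 * e))"
proof (cases "u \<le> v")
  case True
  hence "v powr (- e) \<le> u powr (- e)" using assms powr_mono2'[of "- e" u v] by auto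
  hence "u powr (- e) * v powr (- e) \<le> u powr (- e) * u powr (- e)"
    by (intro mult_left_mono) auto
  also have "\<dots> = u powr (- (2 * e))" by (simp add: powr_add[symmetric])
  finally show ?thesis by (smt (verit) powr_ge_zero)
next
  case False
  hence "u powr (- e) \<le> v powr (- e)" using assms powr_mono2'[of "- e" v u] by auto
  hence "u powr (- e) * v powr (- e) \<le> v powr (- e) * v powr (- e)"
    by (intro mult_right_mono) auto
  also have "\<dots> = v powr (- (2 * e))" by (simp add: powr_add[symmetric])
  finally show ?thesis by (smt (verit) powr_ge_zero)
qed

lemma ennreal_plus4: "0 \<le> a \<Longrightarrow> 0 \<le> b \<Longrightarrow> 0 \<le> c \<Longrightarrow> 0 \<le> d \<Longrightarrow>
   ennreal (a + b + (c + d)) = ennreal a + ennreal b + (ennreal c + ennreal d)"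
  by (simp add: ennreal_plus[symmetric] del: ennreal_plus)

definition Mnum :: "real \<Rightarrow> real \<Rightarrow> real" where
  "Mnum \<sigma> q = 4 * (Zs ((1 - 2 * \<sigma>) * q) * (Zs ((1 - 2 * \<sigma>) * q) * (Zs q * Zs ((1 - \<sigma>) * q))))"

lemma Mnum_nonneg: "Mnum \<sigma> q \<ge> 0" unfolding Mnum_def by (simp add: Zs_nonneg)

lemma numeric_bound:
  assumes q: "q > 1" and s0: "0 \<le> \<sigma>" and sq: "(1 - 2 * \<sigma>) * q > 1" and eps: "\<forall>j\<in>{1..5}. \<epsilon> j \<noteq> 0"
  shows "(\<integral>\<^sup>+K. ennreal (Vw \<sigma> \<epsilon> K powr q) \<partial>count_space (SetK \<epsilon> k)) \<le> ennreal (Mnum \<sigma> q)"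
proof -
  define e where "e = (1/2 - \<sigma>) * q"
  have e2: "2 * e = (1 - 2 * \<sigma>) * q" unfolding e_def by (simp add: algebra_simps)
  have e0: "e \<ge> 0" using e2 sq by linarith
  define \<phi> where "\<phi> n = jb (real_of_int n) powr (- (2 * e))" for n :: int
  define \<psi> where "\<psi> n = jb (real_of_int n) powr (- q)" for n :: int
  define w5 where "w5 n = jb (real_of_int n) powr (- ((1 - \<sigma>) * q))" for n :: int
  have nn: "\<And>n. \<phi> n \<ge> 0" "\<And>n. \<psi> n \<ge> 0" "\<And>n. w5 n \<ge> 0" unfolding \<phi>_def \<psi>_def w5_def by auto
  let ?m = "\<lambda>K. \<epsilon> 3 * K 3 + \<epsilon> 4 * K 4"
  have pw: "Vw \<sigma> \<epsilon> K powr q \<le>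
      \<phi> (K 1) * \<phi> (K 3) * \<psi> (?m K) * w5 (K 5) + \<phi> (K 1) * \<phi> (K 4) * \<psi> (?m K) * w5 (K 5) +
      (\<phi> (K 2) * \<phi> (K 3) * \<psi> (?m K) * w5 (K 5) + \<phi> (K 2) * \<phi> (K 4) * \<psi> (?m K) * w5 (K 5))" for K
  proof -
    let ?j = "\<lambda>n. jb (real_of_int (K n))"
    have "Vw \<sigma> \<epsilon> K powr q = w5 (K 5) * \<psi> (?m K) *
        ((?j 1 powr (- e) * ?j 2 powr (- e)) * (?j 3 powr (- e) * ?j 4 powr (- e)))"
    proof -
      have x1: "(\<sigma> - 1) * q = - ((1 - \<sigma>) * q)" "-1 * q = - q" "(\<sigma> - 1/2) * q = - e"
        unfolding e_def by (simp_all add: algebra_simps)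
      show ?thesis
        unfolding Vw_def powr_mult powr_powr x1 \<psi>_def w5_def
        by (simp only: ac_simps)
    qed
    also have "\<dots> \<le> w5 (K 5) * \<psi> (?m K) * ((\<phi> (K 1) + \<phi> (K 2)) * (\<phi> (K 3) + \<phi> (K 4)))"
      unfolding \<phi>_def using nn e0
      by (intro mult_left_mono mult_mono prod_neg_le) (auto simp: w5_def \<psi>_def)
    finally show ?thesis by (simp add: algebra_simps)
  qed
  have "(\<integral>\<^sup>+K. ennreal (Vw \<sigma> \<epsilon> K powr q) \<partial>count_space (SetK \<epsilon> k)) \<le>
     (\<integral>\<^sup>+K. (ennreal (\<phi> (K 1) * \<phi> (K 3) * \<psi> (?m K) * w5 (K 5)) + ennreal (\<phi> (K 1) * \<phi> (K 4) * \<psi> (?m K) * w5 (K 5))) +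
            (ennreal (\<phi> (K 2) * \<phi> (K 3) * \<psi> (?m K) * w5 (K 5)) + ennreal (\<phi> (K 2) * \<phi> (K 4) * \<psi> (?m K) * w5 (K 5)))
       \<partial>count_space (SetK \<epsilon> k))"
  proof (rule nn_integral_mono)
    fix K
    have "ennreal (Vw \<sigma> \<epsilon> K powr q) \<le> ennreal (\<phi> (K 1) * \<phi> (K 3) * \<psi> (?m K) * w5 (K 5) + \<phi> (K 1) * \<phi> (K 4) * \<psi> (?m K) * w5 (K 5) +
      (\<phi> (K 2) * \<phi> (K 3) * \<psi> (?m K) * w5 (K 5) + \<phi> (K 2) * \<phi> (K 4) * \<psi> (?m K) * w5 (K 5)))"
      by (rule ennreal_leI[OF pw])
    also have "\<dots> = (ennreal (\<phi> (K 1) * \<phi> (K 3) * \<psi> (?m K) * w5 (K 5)) + ennreal (\<phi> (K 1) * \<phi> (K 4) * \<psi> (?m K) * w5 (K 5))) +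
            (ennreal (\<phi> (K 2) * \<phi> (K 3) * \<psi> (?m K) * w5 (K 5)) + ennreal (\<phi> (K 2) * \<phi> (K 4) * \<psi> (?m K) * w5 (K 5)))"
      by (intro ennreal_plus4 mult_nonneg_nonneg nn)
    finally show "ennreal (Vw \<sigma> \<epsilon> K powr q) \<le> \<dots>" .
  qed
  also have "\<dots> = ((\<integral>\<^sup>+K. ennreal (\<phi> (K 1) * \<phi> (K 3) * \<psi> (?m K) * w5 (K 5)) \<partial>count_space (SetK \<epsilon> k)) +
                   (\<integral>\<^sup>+K. ennreal (\<phi> (K 1) * \<phi> (K 4) * \<psi> (?m K) * w5 (K 5)) \<partial>count_space (SetK \<epsilon> k))) +
                  ((\<integral>\<^sup>+K. ennreal (\<phi> (K 2) * \<phi> (K 3) * \<psi> (?m K) * w5 (K 5)) \<partial>count_space (SetK \<epsilon> k)) +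
                   (\<integral>\<^sup>+K. ennreal (\<phi> (K 2) * \<phi> (K 4) * \<psi> (?m K) * w5 (K 5)) \<partial>count_space (SetK \<epsilon> k)))"
    by (simp add: nn_integral_add)
  also have "\<dots> \<le> (ennreal (Zs (2*e)) * (ennreal (Zs (2*e)) * (ennreal (Zs q) * ennreal (Zs ((1 - \<sigma>) * q)))) +
                    ennreal (Zs (2*e)) * (ennreal (Zs (2*e)) * (ennreal (Zs q) * ennreal (Zs ((1 - \<sigma>) * q))))) +
                   (ennreal (Zs (2*e)) * (ennreal (Zs (2*e)) * (ennreal (Zs q) * ennreal (Zs ((1 - \<sigma>) * q)))) +
                    ennreal (Zs (2*e)) * (ennreal (Zs (2*e)) * (ennreal (Zs q) * ennreal (Zs ((1 - \<sigma>) * q)))))"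
  proof -
    have z1: "ennreal (Zs (2*e)) = (\<integral>\<^sup>+x. ennreal (\<phi> x) \<partial>count_space UNIV)"
      unfolding \<phi>_def using sq e2 by (intro Zs_eq) simp
    have z2: "ennreal (Zs q) = (\<integral>\<^sup>+x. ennreal (\<psi> x) \<partial>count_space UNIV)"
      unfolding \<psi>_def using q by (intro Zs_eq)
    have z3: "ennreal (Zs ((1 - \<sigma>) * q)) = (\<integral>\<^sup>+x. ennreal (w5 x) \<partial>count_space UNIV)"
    proof -
      have "(1 - \<sigma>) * q \<ge> (1 - 2 * \<sigma>) * q" using s0 q by (intro mult_right_mono) auto
      thus ?thesis unfolding w5_def using sq by (intro Zs_eq) simp
    qed
    show ?thesis unfolding z1 z2 z3
      by (intro add_mono term_bound eps nn) auto
  qed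
  also have "\<dots> = ennreal (Mnum \<sigma> q)"
    unfolding Mnum_def e2 by (simp add: Zs_nonneg ennreal_mult[symmetric] ennreal_plus[symmetric] del: ennreal_plus) 
  finally show ?thesis .
qed


lemma swap_SetK:
  fixes G :: "(nat \<Rightarrow> int) \<Rightarrow> ennreal"
  shows "(\<integral>\<^sup>+k. (\<integral>\<^sup>+K. G K \<partial>count_space (SetK \<epsilon> k)) \<partial>count_space UNIV) = (\<integral>\<^sup>+K. G K \<partial>count_space SetA)"
proof -
  let ?s = "\<lambda>K. (\<Sum>j\<in>{1..5}. \<epsilon> j * K j)"
  have "\<And>k. (\<integral>\<^sup>+K. G K \<partial>count_space (SetK \<epsilon> k)) = (\<integral>\<^sup>+K. G K * indicator {?s K} k \<partial>count_space SetA)"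
  proof -
    fix k
    have "(\<integral>\<^sup>+K. G K \<partial>count_space (SetK \<epsilon> k)) = (\<integral>\<^sup>+K. G K * indicator (SetK \<epsilon> k) K \<partial>count_space UNIV)"
      by (rule nn_integral_count_space_indicator) simp
    also have "\<dots> = (\<integral>\<^sup>+K. (G K * indicator {?s K} k) * indicator SetA K \<partial>count_space UNIV)"
      by (intro nn_integral_cong) (auto simp: indicator_def SetK_def SetA_def)
    also have "\<dots> = (\<integral>\<^sup>+K. G K * indicator {?s K} k \<partial>count_space SetA)"
      by (rule nn_integral_count_space_indicator[symmetric]) simp
    finally show "?thesis k" .
  qed
  hence "(\<integral>\<^sup>+k. (\<integral>\<^sup>+K. G K \<partial>count_space (SetK \<epsilon> k)) \<partial>count_space UNIV) =
     (\<integral>\<^sup>+k. (\<integral>\<^sup>+K. G K * indicator {?s K} k \<partial>count_space SetA) \<partial>count_space UNIV)"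
    by simp
  also have "\<dots> = (\<integral>\<^sup>+K. (\<integral>\<^sup>+k. G K * indicator {?s K} k \<partial>count_space UNIV) \<partial>count_space SetA)"
    by (rule nn_integral_count_space_nn_integral[symmetric]) auto
  also have "\<dots> = (\<integral>\<^sup>+K. G K \<partial>count_space SetA)"
    by (intro nn_integral_cong) (simp add: nn_integral_cmult_indicator)
  finally show ?thesis .
qed

lemma SetA_prod:
  fixes h :: "nat \<Rightarrow> int \<Rightarrow> ennreal"
  shows "(\<integral>\<^sup>+K. (\<Prod>j\<in>{1..5}. h j (K j)) \<partial>count_space SetA) \<le> (\<Prod>j\<in>{1..5}. \<integral>\<^sup>+n. h j n \<partial>count_space UNIV)"
proof -
  define g where "g z = h 1 (fst z) * (h 2 (fst (snd z)) * (h 3 (fst (snd (snd z))) * (h 4 (fst (snd (snd (snd z)))) * h 5 (snd (snd (snd (snd z)))))))"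
    for z :: "int \<times> int \<times> int \<times> int \<times> int"
  have inj: "inj_on (\<lambda>K. (K 1, K 2, K 3, K 4, K 5)) SetA"
  proof (rule inj_onI)
    fix K K' assume "K \<in> SetA" "K' \<in> SetA" and eq: "(K 1, K 2, K 3, K 4, K 5) = (K' 1, K' 2, K' 3, K' 4, K' 5)"
    show "K = K'"
    proof
      fix j
      show "K j = K' j"
      proof (cases "j \<in> {1..5}")
        case True
        hence "j = 1 \<or> j = 2 \<or> j = 3 \<or> j = 4 \<or> j = 5" by auto
        thus ?thesis using eq by auto
      next
        case False
        thus ?thesis using \<open>K \<in> SetA\<close> \<open>K' \<in> SetA\<close> unfolding SetA_def by simp
      qed
    qed
  qed
  have "(\<integral>\<^sup>+K. (\<Prod>j\<in>{1..5}. h j (K j)) \<partial>count_space SetA) = (\<integral>\<^sup>+K. g (K 1, K 2, K 3, K 4, K 5) \<partial>count_space SetA)"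
    unfolding g_def prod5 by simp
  also have "\<dots> \<le> (\<integral>\<^sup>+z. g z \<partial>count_space UNIV)"
    by (rule nn_integral_inj_le[OF inj])
  also have "\<dots> = (\<Prod>j\<in>{1..5}. \<integral>\<^sup>+n. h j n \<partial>count_space UNIV)"
    unfolding g_def prod5 by (rule prod5_count)
  finally show ?thesis .
qed

lemma discrete_main:
  fixes W :: "int \<Rightarrow> (nat \<Rightarrow> int) \<Rightarrow> real" and b :: "nat \<Rightarrow> int \<Rightarrow> real"
  assumes p: "p > 1" and q: "1/p + 1/q = 1" and s0: "0 \<le> \<sigma>" and sq: "(1 - 2 * \<sigma>) * q > 1"
    and eps: "\<forall>j\<in>{1..5}. \<epsilon> j \<noteq> 0" and A0: "A' \<ge> 0"
    and W: "\<And>k K. K \<in> SetK \<epsilon> k \<Longrightarrow> 0 \<le> W k K \<and> W k K \<le> A' * Vw \<sigma> \<epsilon> K"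
    and b0: "\<And>j n. 0 \<le> b j n"
  shows "(\<integral>\<^sup>+k. epow (\<integral>\<^sup>+K. ennreal (W k K * (\<Prod>j\<in>{1..5}. b j (K j))) \<partial>count_space (SetK \<epsilon> k)) p \<partial>count_space UNIV)
     \<le> ennreal (A' powr p * Mnum \<sigma> q powr (p / q)) * (\<Prod>j\<in>{1..5}. \<integral>\<^sup>+n. ennreal (b j n powr p) \<partial>count_space UNIV)"
proof -
  have q1: "q > 1" using p q
    by (smt (verit, best) divide_less_eq_1_pos divide_nonneg_nonneg less_divide_eq_1 zero_less_divide_1_iff)
  have p0: "p > 0" using p by simp
  let ?B = "\<lambda>K. (\<Prod>j\<in>{1..5}. b j (K j))"
  have B0: "\<And>K. ?B K \<ge> 0" using b0 by (simp add: prod_nonneg)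
  have V0: "\<And>K. Vw \<sigma> \<epsilon> K \<ge> 0" unfolding Vw_def by simp
  have step: "epow (\<integral>\<^sup>+K. ennreal (W k K * ?B K) \<partial>count_space (SetK \<epsilon> k)) p
      \<le> ennreal (A' powr p * Mnum \<sigma> q powr (p / q)) * (\<integral>\<^sup>+K. ennreal (?B K powr p) \<partial>count_space (SetK \<epsilon> k))" for k
  proof -
    have "(\<integral>\<^sup>+K. ennreal (W k K * ?B K) \<partial>count_space (SetK \<epsilon> k)) \<le>
          (\<integral>\<^sup>+K. ennreal A' * ennreal (Vw \<sigma> \<epsilon> K * ?B K) \<partial>count_space (SetK \<epsilon> k))"
    proof (rule nn_integral_mono)
      fix K assume "K \<in> space (count_space (SetK \<epsilon> k))"
      hence "W k K \<le> A' * Vw \<sigma> \<epsilon> K" using W by simp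
      hence "W k K * ?B K \<le> A' * (Vw \<sigma> \<epsilon> K * ?B K)" using B0[of K] by (simp add: mult_right_mono mult.assoc[symmetric])
      thus "ennreal (W k K * ?B K) \<le> ennreal A' * ennreal (Vw \<sigma> \<epsilon> K * ?B K)"
      proof -
        assume "W k K * ?B K \<le> A' * (Vw \<sigma> \<epsilon> K * ?B K)"
        have X0: "0 \<le> Vw \<sigma> \<epsilon> K * ?B K" using V0 B0 by simp
        have "ennreal (W k K * ?B K) \<le> ennreal (A' * (Vw \<sigma> \<epsilon> K * ?B K))"
          by (rule ennreal_leI) fact
        also have "\<dots> = ennreal A' * ennreal (Vw \<sigma> \<epsilon> K * ?B K)"
          by (rule ennreal_mult[OF A0 X0])
        finally show ?thesis .
      qed
    qed
    also have "\<dots> = ennreal A' * (\<integral>\<^sup>+K. ennreal (Vw \<sigma> \<epsilon> K * ?B K) \<partial>count_space (SetK \<epsilon> k))"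
      by (simp add: nn_integral_cmult)
    also have "\<dots> \<le> ennreal A' * (epow (\<integral>\<^sup>+K. ennreal (?B K powr p) \<partial>count_space (SetK \<epsilon> k)) (1/p) *
                       epow (\<integral>\<^sup>+K. ennreal (Vw \<sigma> \<epsilon> K powr q) \<partial>count_space (SetK \<epsilon> k)) (1/q))"
    proof -
      have "(\<integral>\<^sup>+K. ennreal (Vw \<sigma> \<epsilon> K * ?B K) \<partial>count_space (SetK \<epsilon> k)) =
            (\<integral>\<^sup>+K. ennreal (?B K * Vw \<sigma> \<epsilon> K) \<partial>count_space (SetK \<epsilon> k))" by (simp add: mult.commute)
      also have "\<dots> \<le> epow (\<integral>\<^sup>+K. ennreal (?B K powr p) \<partial>count_space (SetK \<epsilon> k)) (1/p) *
                       epow (\<integral>\<^sup>+K. ennreal (Vw \<sigma> \<epsilon> K powr q) \<partial>count_space (SetK \<epsilon> k)) (1/q)"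
        using B0 V0 by (intro holder[OF p q]) auto
      finally show ?thesis by (intro mult_left_mono) auto
    qed
    also have "\<dots> \<le> ennreal A' * (epow (\<integral>\<^sup>+K. ennreal (?B K powr p) \<partial>count_space (SetK \<epsilon> k)) (1/p) *
                       epow (ennreal (Mnum \<sigma> q)) (1/q))"
      using q1 by (intro mult_left_mono epow_mono numeric_bound[OF q1 s0 sq eps]) auto
    finally have T: "(\<integral>\<^sup>+K. ennreal (W k K * ?B K) \<partial>count_space (SetK \<epsilon> k)) \<le> \<dots>" .
    have "epow (\<integral>\<^sup>+K. ennreal (W k K * ?B K) \<partial>count_space (SetK \<epsilon> k)) p \<le>
          epow (ennreal A' * (epow (\<integral>\<^sup>+K. ennreal (?B K powr p) \<partial>count_space (SetK \<epsilon> k)) (1/p) *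
                       epow (ennreal (Mnum \<sigma> q)) (1/q))) p"
      by (rule epow_mono[OF p0 T])
    also have "\<dots> = ennreal (A' powr p) * ((\<integral>\<^sup>+K. ennreal (?B K powr p) \<partial>count_space (SetK \<epsilon> k)) *
                       ennreal (Mnum \<sigma> q powr (p / q)))"
      using p0 q1 A0 Mnum_nonneg[of \<sigma> q]
      by (simp add: epow_mult epow_epow epow_ennreal powr_powr)
    also have "\<dots> = ennreal (A' powr p * Mnum \<sigma> q powr (p / q)) * (\<integral>\<^sup>+K. ennreal (?B K powr p) \<partial>count_space (SetK \<epsilon> k))"
      by (simp add: ennreal_mult mult_ac)
    finally show ?thesis .
  qed
  have "(\<integral>\<^sup>+k. epow (\<integral>\<^sup>+K. ennreal (W k K * ?B K) \<partial>count_space (SetK \<epsilon> k)) p \<partial>count_space UNIV)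
     \<le> (\<integral>\<^sup>+k. ennreal (A' powr p * Mnum \<sigma> q powr (p / q)) * (\<integral>\<^sup>+K. ennreal (?B K powr p) \<partial>count_space (SetK \<epsilon> k)) \<partial>count_space UNIV)"
    by (intro nn_integral_mono step)
  also have "\<dots> = ennreal (A' powr p * Mnum \<sigma> q powr (p / q)) * (\<integral>\<^sup>+k. (\<integral>\<^sup>+K. ennreal (?B K powr p) \<partial>count_space (SetK \<epsilon> k)) \<partial>count_space UNIV)"
    by (simp add: nn_integral_cmult)
  also have "(\<integral>\<^sup>+k. (\<integral>\<^sup>+K. ennreal (?B K powr p) \<partial>count_space (SetK \<epsilon> k)) \<partial>count_space UNIV) = (\<integral>\<^sup>+K. ennreal (?B K powr p) \<partial>count_space SetA)"
    by (rule swap_SetK)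
  also have "\<dots> = (\<integral>\<^sup>+K. (\<Prod>j\<in>{1..5}. ennreal (b j (K j) powr p)) \<partial>count_space SetA)"
    by (intro nn_integral_cong) (simp add: prod_powr_distrib prod_ennreal b0)
  also have "\<dots> \<le> (\<Prod>j\<in>{1..5}. \<integral>\<^sup>+n. ennreal (b j n powr p) \<partial>count_space UNIV)"
    by (rule SetA_prod)
  finally show ?thesis by (simp add: mult_left_mono)
qed


lemma tilde_meas0:
  assumes "u k \<in> borel_measurable borel"
  shows "(\<lambda>x. cmod (tilde u k x)) \<in> borel_measurable borel"
proof -
  have "(\<lambda>x. x - (real_of_int k)\<^sup>2) \<in> borel_measurable borel" by measurable
  hence "(\<lambda>x. u k (x - (real_of_int k)\<^sup>2)) \<in> borel_measurable borel"
    using measurable_compose[of "\<lambda>x. x - (real_of_int k)\<^sup>2" borel borel "u k"] assms by (simp add: comp_def)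
  thus ?thesis unfolding tilde_def by measurable
qed

lemma tilde_meas:
  assumes "u k \<in> borel_measurable borel"
  shows "(\<lambda>x. ennreal (cmod (tilde u k x))) \<in> borel_measurable borel"
  using tilde_meas0[of u k, OF assms] by measurable

lemma L1_bound:
  fixes u :: "int \<Rightarrow> real \<Rightarrow> complex"
  assumes meas: "u n \<in> borel_measurable borel" and d0: "0 < \<delta>" and d1: "\<delta> < 1/2"
  shows "(\<integral>\<^sup>+x. ennreal (cmod (tilde u n x)) \<partial>lborel) \<le>
     ennreal (jb (real_of_int n) powr (-1/2)) *
     (epow (\<integral>\<^sup>+x. ennreal (jb x powr (- ((1 / (1/2 - \<delta>)) / 2))) \<partial>lborel) (1 / (1 / (1/2 - \<delta>))) *
      Lqk (1/2) (1/2) (1 / (1/2 + \<delta>)) u n)"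
proof -
  define r where "r = 1 / (1/2 + \<delta>)"
  define r' where "r' = 1 / (1/2 - \<delta>)"
  define c where "c = (real_of_int n)\<^sup>2"
  have r1: "r > 1" unfolding r_def using d0 d1 by (simp add: field_simps)
  have rr: "1/r + 1/r' = 1" unfolding r_def r'_def using d0 d1 by simp
  have r0: "r > 0" using r1 by simp
  have [measurable]: "u n \<in> borel_measurable borel" by fact
  define f where "f x = jb (x + c) powr (1/2) * cmod (u n x)" for x
  define g where "g x = jb (x + c) powr (-1/2)" for x
  have fm[measurable]: "f \<in> borel_measurable borel" unfolding f_def by measurable
  have gm[measurable]: "g \<in> borel_measurable borel" unfolding g_def by measurable
  have "(\<integral>\<^sup>+x. ennreal (cmod (tilde u n x)) \<partial>lborel) = (\<integral>\<^sup>+x. ennreal (cmod (u n (x + (- c)))) \<partial>lborel)"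
    unfolding tilde_def c_def by simp
  also have "\<dots> = (\<integral>\<^sup>+x. ennreal (cmod (u n x)) \<partial>lborel)"
    by (rule lborel_translate[where f = "\<lambda>x. ennreal (cmod (u n x))"]) measurable
  also have "\<dots> = (\<integral>\<^sup>+x. ennreal (f x * g x) \<partial>lborel)"
  proof (intro nn_integral_cong)
    fix x
    have "jb (x + c) powr (1/2) * jb (x + c) powr (-1/2) = 1"
      by (simp add: powr_add[symmetric])
    thus "ennreal (cmod (u n x)) = ennreal (f x * g x)"
      unfolding f_def g_def by (simp add: algebra_simps)
  qed
  also have "\<dots> \<le> epow (\<integral>\<^sup>+x. ennreal (f x powr r) \<partial>lborel) (1/r) * epow (\<integral>\<^sup>+x. ennreal (g x powr r') \<partial>lborel) (1/r')"
    by (rule holder[OF r1 rr]) (auto simp: f_def g_def)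
  also have "(\<integral>\<^sup>+x. ennreal (g x powr r') \<partial>lborel) = (\<integral>\<^sup>+x. ennreal (jb x powr (- (r' / 2))) \<partial>lborel)"
  proof -
    have "(\<integral>\<^sup>+x. ennreal (g x powr r') \<partial>lborel) = (\<integral>\<^sup>+x. ennreal (jb (x + c) powr (- (r' / 2))) \<partial>lborel)"
      unfolding g_def by (simp add: powr_powr)
    also have "\<dots> = (\<integral>\<^sup>+x. ennreal (jb x powr (- (r' / 2))) \<partial>lborel)"
      by (rule lborel_translate[where f = "\<lambda>x. ennreal (jb x powr (- (r' / 2)))"]) measurable
    finally show ?thesis .
  qed
  also have "epow (\<integral>\<^sup>+x. ennreal (f x powr r) \<partial>lborel) (1/r) =
      ennreal (jb (real_of_int n) powr (-1/2)) * Lqk (1/2) (1/2) r u n"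
  proof -
    have "Lqk (1/2) (1/2) r u n = epow (\<integral>\<^sup>+x. ennreal (jb (real_of_int n) powr (r/2)) * ennreal (f x powr r) \<partial>lborel) (1/r)"
      unfolding Lqk_def f_def c_def
      by (intro arg_cong2[where f = epow] nn_integral_cong refl)
         (simp add: powr_mult powr_powr ennreal_mult[symmetric] mult.assoc)
    also have "\<dots> = ennreal (jb (real_of_int n) powr (1/2)) * epow (\<integral>\<^sup>+x. ennreal (f x powr r) \<partial>lborel) (1/r)"
      using r0 by (simp add: nn_integral_cmult epow_ennreal_mult powr_powr)
    finally have "ennreal (jb (real_of_int n) powr (-1/2)) * Lqk (1/2) (1/2) r u n =
       (ennreal (jb (real_of_int n) powr (-1/2)) * ennreal (jb (real_of_int n) powr (1/2))) * epow (\<integral>\<^sup>+x. ennreal (f x powr r) \<partial>lborel) (1/r)"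
      by (simp add: mult.assoc)
    also have "ennreal (jb (real_of_int n) powr (-1/2)) * ennreal (jb (real_of_int n) powr (1/2)) = 1"
      by (simp add: ennreal_mult[symmetric] powr_add[symmetric])
    finally show ?thesis by simp
  qed
  finally show ?thesis unfolding r_def r'_def by (simp add: mult_ac)
qed

lemma PiM_prod5:
  fixes v :: "nat \<Rightarrow> int \<Rightarrow> real \<Rightarrow> complex" and K :: "nat \<Rightarrow> int"
  assumes "\<And>j. j \<in> {1..5} \<Longrightarrow> v j (K j) \<in> borel_measurable borel"
  shows "(\<integral>\<^sup>+\<Lambda>. (\<Prod>j\<in>{1..5}. ennreal (cmod (tilde (v j) (K j) (\<Lambda> j)))) \<partial>PiM {1..5} (\<lambda>_. lborel))
     = (\<Prod>j\<in>{1..5}. \<integral>\<^sup>+x. ennreal (cmod (tilde (v j) (K j) x)) \<partial>lborel)"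
proof -
  interpret product_sigma_finite "\<lambda>_. lborel" by standard
  show ?thesis
  proof (rule product_nn_integral_prod)
    fix j :: nat assume "j \<in> {1..5}"
    show "(\<lambda>x. ennreal (cmod (tilde (v j) (K j) x))) \<in> borel_measurable lborel"
      using tilde_meas[of "v j" "K j", OF assms[OF \<open>j \<in> {1..5}\<close>]] by simp
  qed simp
qed

lemma epow_one[simp]: "epow 1 r = 1"
  unfolding epow_def by simp

lemma epow_prod: assumes "r > 0" shows "epow (\<Prod>i\<in>I. f i) r = (\<Prod>i\<in>I. epow (f i) r)"
proof (induction I rule: infinite_finite_induct)
  case (infinite A) thus ?case by (simp add: epow_ennreal)
next
  case empty thus ?case by (simp add: epow_ennreal)
next
  case (insert x F) thus ?case by (simp add: epow_mult[OF assms])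
qed

lemma point_le_sum: "f n0 \<le> (\<integral>\<^sup>+n. f n \<partial>count_space UNIV)"
proof -
  have "f n0 = (\<integral>\<^sup>+n. f n * indicator {n0} n \<partial>count_space UNIV)" by simp
  also have "\<dots> \<le> (\<integral>\<^sup>+n. f n \<partial>count_space UNIV)"
    by (intro nn_integral_mono) (auto simp: indicator_def)
  finally show ?thesis .
qed


lemma Lqk_R_bound:
  fixes U :: "int \<Rightarrow> real \<Rightarrow> complex"
  assumes d0: "0 < \<delta>" and C0: "C > 0"
    and bound: "\<And>x. ennreal (cmod (tilde U k x)) \<le> ennreal (C / jb x powr (1 + 10 * \<delta>)) * S"
    and J2: "(\<integral>\<^sup>+x. ennreal (jb x powr (-(11/4))) \<partial>lborel) \<le> ennreal J2r" and J21: "J2r \<ge> 1"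
  shows "Lqk (1/2) (1 - \<delta>) (1 / (4 * \<delta>)) U k \<le> ennreal (jb (real_of_int k) powr (1/2) * C * J2r powr (4 * \<delta>)) * S"
proof (cases "S = \<top>")
  case True
  have "jb (real_of_int k) powr (1/2) * C * J2r powr (4 * \<delta>) > 0" using C0 J21 by simp
  hence "ennreal (jb (real_of_int k) powr (1/2) * C * J2r powr (4 * \<delta>)) * S = \<top>"
    using True C0 J21 by (simp add: ennreal_mult_top del: ennreal_mult_eq_top_iff)
  thus ?thesis by simp
next
  case False
  then obtain s where S: "S = ennreal s" and s0: "s \<ge> 0" by (cases S) auto
  define q0 where "q0 = 1 / (4 * \<delta>)"
  have q0: "q0 > 0" unfolding q0_def using d0 by simp
  define X where "X = jb (real_of_int k) powr (1/2) * C * s"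
  have X0: "X \<ge> 0" unfolding X_def using C0 s0 by simp
  have pw: "(jb (real_of_int k) powr (1/2) * jb (x + (real_of_int k)\<^sup>2) powr (1 - \<delta>) * cmod (U k x)) powr q0
       \<le> X powr q0 * jb (x + (real_of_int k)\<^sup>2) powr (- (11/4))" for x
  proof -
    let ?y = "x + (real_of_int k)\<^sup>2"
    have "ennreal (cmod (tilde U k ?y)) \<le> ennreal (C / jb ?y powr (1 + 10 * \<delta>)) * ennreal s"
      using bound[of ?y] S by simp
    also have "\<dots> = ennreal (C / jb ?y powr (1 + 10 * \<delta>) * s)"
      using C0 s0 by (intro ennreal_mult[symmetric]) auto
    finally have "cmod (tilde U k ?y) \<le> C / jb ?y powr (1 + 10 * \<delta>) * s"
      using C0 s0 by (subst (asm) ennreal_le_iff) auto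
    hence b: "cmod (U k x) \<le> C / jb ?y powr (1 + 10 * \<delta>) * s" unfolding tilde_def by simp
    have "jb (real_of_int k) powr (1/2) * jb ?y powr (1 - \<delta>) * cmod (U k x)
        \<le> jb (real_of_int k) powr (1/2) * jb ?y powr (1 - \<delta>) * (C / jb ?y powr (1 + 10 * \<delta>) * s)"
      by (intro mult_left_mono b) auto
    also have "\<dots> = X * (jb ?y powr (1 - \<delta>) / jb ?y powr (1 + 10 * \<delta>))"
      unfolding X_def by (simp add: field_simps)
    also have "jb ?y powr (1 - \<delta>) / jb ?y powr (1 + 10 * \<delta>) = jb ?y powr (- (11 * \<delta>))"
      by (simp add: powr_diff[symmetric])
    finally have le: "jb (real_of_int k) powr (1/2) * jb ?y powr (1 - \<delta>) * cmod (U k x) \<le> X * jb ?y powr (- (11 * \<delta>))" .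
    have "(jb (real_of_int k) powr (1/2) * jb ?y powr (1 - \<delta>) * cmod (U k x)) powr q0 \<le> (X * jb ?y powr (- (11 * \<delta>))) powr q0"
      using le q0 by (intro powr_mono2) auto
    also have "\<dots> = X powr q0 * jb ?y powr (- (11/4))"
      using d0 unfolding q0_def by (simp add: powr_mult powr_powr)
    finally show ?thesis .
  qed
  have "(\<integral>\<^sup>+x. ennreal ((jb (real_of_int k) powr (1/2) * jb (x + (real_of_int k)\<^sup>2) powr (1 - \<delta>) * cmod (U k x)) powr q0) \<partial>lborel)
      \<le> (\<integral>\<^sup>+x. ennreal (X powr q0) * ennreal (jb (x + (real_of_int k)\<^sup>2) powr (- (11/4))) \<partial>lborel)"
    by (intro nn_integral_mono) (simp add: ennreal_mult[symmetric] ennreal_leI pw)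
  also have "\<dots> = ennreal (X powr q0) * (\<integral>\<^sup>+x. ennreal (jb (x + (real_of_int k)\<^sup>2) powr (- (11/4))) \<partial>lborel)"
    by (rule nn_integral_cmult) measurable
  also have "(\<integral>\<^sup>+x. ennreal (jb (x + (real_of_int k)\<^sup>2) powr (- (11/4))) \<partial>lborel) = (\<integral>\<^sup>+x. ennreal (jb x powr (- (11/4))) \<partial>lborel)"
    by (rule lborel_translate[where f = "\<lambda>x. ennreal (jb x powr (- (11/4)))"]) measurable
  also have "ennreal (X powr q0) * \<dots> \<le> ennreal (X powr q0) * ennreal J2r"
    using J2 by (intro mult_left_mono) auto
  finally have I: "(\<integral>\<^sup>+x. ennreal ((jb (real_of_int k) powr (1/2) * jb (x + (real_of_int k)\<^sup>2) powr (1 - \<delta>) * cmod (U k x)) powr q0) \<partial>lborel)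
     \<le> ennreal (X powr q0 * J2r)" using J21 by (simp add: ennreal_mult)
  have "Lqk (1/2) (1 - \<delta>) (1 / (4 * \<delta>)) U k \<le> epow (ennreal (X powr q0 * J2r)) (1 / q0)"
    unfolding Lqk_def q0_def[symmetric] using q0 by (intro epow_mono I) auto
  also have "\<dots> = ennreal (X * J2r powr (4 * \<delta>))"
    using X0 J21 q0 d0 unfolding q0_def by (simp add: epow_ennreal powr_mult powr_powr)
  also have "\<dots> = ennreal (jb (real_of_int k) powr (1/2) * C * J2r powr (4 * \<delta>)) * S"
    unfolding S X_def using C0 s0 J21 by (simp add: ennreal_mult[symmetric] mult_ac)
  finally show ?thesis .
qed

lemma W_arith:
  fixes x1 x2 x3 x4 x5 y z A c D P bt \<sigma> :: real
  assumes pos: "x1 > 0" "x2 > 0" "x3 > 0" "x4 > 0" "x5 > 0" "y > 0" "z > 0" "c > 0" "A \<ge> 0" "D \<ge> 0"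
    and bt: "0 \<le> bt" "bt \<le> A * P / (y * z)" and P: "P \<le> D * (x1 * x2 * x3 * x4 * x5) powr \<sigma>"
    and x5y: "x5 \<le> c * y"
  shows "y powr (1/2) * bt * (x1 powr (-1/2) * (x2 powr (-1/2) * (x3 powr (-1/2) * (x4 powr (-1/2) * x5 powr (-1/2)))))
     \<le> A * sqrt c * D * (x5 powr (\<sigma> - 1) * z powr (-1) *
          (x1 powr (\<sigma> - 1/2) * x2 powr (\<sigma> - 1/2) * x3 powr (\<sigma> - 1/2) * x4 powr (\<sigma> - 1/2)))"
proof -
  define X where "X = x1 powr (-1/2) * (x2 powr (-1/2) * (x3 powr (-1/2) * (x4 powr (-1/2) * x5 powr (-1/2))))"
  have X0: "X \<ge> 0" unfolding X_def by simp
  have y12: "y powr (1/2) / y = y powr (-1/2)"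
  proof -
    have "y powr (-1/2) = y powr (1/2 - 1)" by simp
    also have "\<dots> = y powr (1/2) / y powr 1" by (rule powr_diff)
    also have "\<dots> = y powr (1/2) / y" using pos by simp
    finally show ?thesis by simp
  qed
  have yc: "y powr (-1/2) \<le> sqrt c * x5 powr (-1/2)"
  proof -
    have "x5 / c \<le> y" using x5y pos by (simp add: field_simps)
    hence "y powr (-1/2) \<le> (x5 / c) powr (-1/2)" using pos by (intro powr_mono2') auto
    also have "\<dots> = sqrt c * x5 powr (-1/2)"
      using pos by (simp add: powr_divide powr_minus_divide powr_half_sqrt[symmetric] field_simps)
    finally show ?thesis .
  qed
  have "y powr (1/2) * bt * X \<le> y powr (1/2) * (A * P / (y * z)) * X"
    using bt X0 by (intro mult_right_mono mult_left_mono) auto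
  also have "\<dots> = A * P * (y powr (1/2) / y) * X / z" using pos by (simp add: field_simps)
  also have "\<dots> = A * P * y powr (-1/2) * X / z" by (simp add: y12)
  also have "\<dots> \<le> A * (D * (x1 * x2 * x3 * x4 * x5) powr \<sigma>) * (sqrt c * x5 powr (-1/2)) * X / z"
    using pos X0 P yc by (intro divide_right_mono mult_right_mono mult_mono mult_left_mono) auto
  also have "\<dots> = A * sqrt c * D * (x5 powr (\<sigma> - 1) * z powr (-1) *
          (x1 powr (\<sigma> - 1/2) * x2 powr (\<sigma> - 1/2) * x3 powr (\<sigma> - 1/2) * x4 powr (\<sigma> - 1/2)))"
  proof -
    have e1: "x powr (\<sigma> - 1/2) = x powr \<sigma> * x powr (-1/2)" for x :: real
      by (simp add: powr_add[symmetric])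
    have e2: "x5 powr (\<sigma> - 1) = x5 powr \<sigma> * x5 powr (-1/2) * x5 powr (-1/2)"
      by (simp add: powr_add[symmetric])
    have e3: "z powr (-1) = 1 / z" using pos by (simp add: powr_minus_divide)
    show ?thesis unfolding X_def e1 e2 e3 powr_mult by (simp add: field_simps)
  qed
  finally show ?thesis unfolding X_def .
qed

lemma one_plus_sum_le_prod:
  fixes f :: "'a \<Rightarrow> real"
  assumes "finite I" "\<And>i. i \<in> I \<Longrightarrow> f i \<ge> 0"
  shows "1 + sum f I \<le> (\<Prod>i\<in>I. 1 + f i)"
  using assms
proof (induction I rule: finite_induct)
  case empty thus ?case by simp
next
  case (insert x F)
  have fx: "f x \<ge> 0" using insert by auto
  have IH: "1 + sum f F \<le> (\<Prod>i\<in>F. 1 + f i)" using insert by auto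
  have sF: "sum f F \<ge> 0" using insert by (intro sum_nonneg) auto
  have "1 + sum f (insert x F) = 1 + f x + sum f F" using insert by simp
  also have "\<dots> \<le> (1 + f x) * (1 + sum f F)" using fx sF by (simp add: algebra_simps)
  also have "\<dots> \<le> (1 + f x) * (\<Prod>i\<in>F. 1 + f i)" using IH fx by (intro mult_left_mono) auto
  also have "\<dots> = (\<Prod>i\<in>insert x F. 1 + f i)" using insert by simp
  finally show ?case .
qed

lemma Max_jb_bound:
  fixes \<epsilon> K :: "nat \<Rightarrow> int"
  assumes K: "K \<in> SetK \<epsilon> k" and eps: "\<forall>j\<in>{1..5}. \<epsilon> j = 1 \<or> \<epsilon> j = -1"
  shows "jb (real_of_int (Max ({\<bar>k\<bar>} \<union> (\<lambda>j. \<bar>K j\<bar>) ` {1..5})))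
     \<le> sqrt 2 ^ 5 * (jb (real_of_int (K 1)) * jb (real_of_int (K 2)) * jb (real_of_int (K 3)) * jb (real_of_int (K 4)) * jb (real_of_int (K 5)))"
proof -
  let ?S = "(\<Sum>j\<in>{1..5}. \<bar>K j\<bar>)"
  have ks: "k = (\<Sum>j\<in>{1..5}. \<epsilon> j * K j)" using K unfolding SetK_def by simp
  have "\<bar>k\<bar> \<le> (\<Sum>j\<in>{1..5}. \<bar>\<epsilon> j * K j\<bar>)" unfolding ks by (rule sum_abs)
  also have "\<dots> = ?S"
  proof (intro sum.cong refl)
    fix j assume "j \<in> {1..5::nat}"
    hence "\<epsilon> j = 1 \<or> \<epsilon> j = -1" using eps by (rule bspec[rotated])
    hence "\<bar>\<epsilon> j\<bar> = 1" by auto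
    thus "\<bar>\<epsilon> j * K j\<bar> = \<bar>K j\<bar>" by (simp add: abs_mult)
  qed
  finally have k1: "\<bar>k\<bar> \<le> ?S" .
  have k2: "\<bar>K j\<bar> \<le> ?S" if "j \<in> {1..5}" for j
    using that by (intro member_le_sum) auto
  have M: "Max ({\<bar>k\<bar>} \<union> (\<lambda>j. \<bar>K j\<bar>) ` {1..5}) \<le> ?S"
    using k1 k2 by (intro Max.boundedI) auto
  have M0: "Max ({\<bar>k\<bar>} \<union> (\<lambda>j. \<bar>K j\<bar>) ` {1..5}) \<ge> 0"
    by (rule order.trans[OF abs_ge_zero[of k]]) (intro Max_ge, auto)
  let ?M = "Max ({\<bar>k\<bar>} \<union> (\<lambda>j. \<bar>K j\<bar>) ` {1..5})"
  have "jb (real_of_int ?M) \<le> 1 + \<bar>real_of_int ?M\<bar>" by (rule jb_le)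
  also have "\<dots> \<le> 1 + (\<Sum>j\<in>{1..5}. \<bar>real_of_int (K j)\<bar>)"
  proof -
    have a: "\<bar>real_of_int ?M\<bar> = real_of_int ?M" using M0 by simp
    have b: "real_of_int ?M \<le> real_of_int ?S" using M by (simp only: of_int_le_iff)
    have c: "real_of_int ?S = (\<Sum>j\<in>{1..5}. \<bar>real_of_int (K j)\<bar>)" by simp
    show ?thesis using a b c by linarith
  qed
  also have "\<dots> \<le> (\<Prod>j\<in>{1..5}. 1 + \<bar>real_of_int (K j)\<bar>)"
    by (rule one_plus_sum_le_prod) auto
  also have "\<dots> \<le> (\<Prod>j\<in>{1..5::nat}. sqrt 2 * jb (real_of_int (K j)))"
    by (intro prod_mono) (auto intro: one_plus_abs_le)
  also have "\<dots> = sqrt 2 ^ 5 * (jb (real_of_int (K 1)) * jb (real_of_int (K 2)) * jb (real_of_int (K 3)) * jb (real_of_int (K 4)) * jb (real_of_int (K 5)))"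
    unfolding prod5 by (simp add: power_def numeral_eq_Suc mult_ac)
  finally show ?thesis .
qed


lemma prod_mono_ennreal:
  fixes f g :: "'a \<Rightarrow> ennreal"
  assumes "\<And>i. i \<in> A \<Longrightarrow> f i \<le> g i"
  shows "prod f A \<le> prod g A"
  using assms
proof (induction A rule: infinite_finite_induct)
  case (insert x F)
  thus ?case by (simp add: mult_mono)
qed auto

lemma W_bound:
  fixes \<epsilon> K :: "nat \<Rightarrow> int" and \<beta> :: "int \<Rightarrow> (nat \<Rightarrow> int) \<Rightarrow> real"
  assumes K: "K \<in> SetK \<epsilon> k" and eps: "\<forall>j\<in>{1..5}. \<epsilon> j = 1 \<or> \<epsilon> j = -1"
    and c0: "c > 0" and A0: "A > 0" and s0: "0 \<le> \<sigma>" and C3: "C3 \<ge> 0"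
    and supp: "\<beta> k K \<noteq> 0 \<longrightarrow> jb (real_of_int (K 5)) \<le> c * jb (real_of_int k)"
    and bb: "\<bar>\<beta> k K\<bar> \<le> A * jb (real_of_int (Max ({\<bar>k\<bar>} \<union> (\<lambda>j. \<bar>K j\<bar>) ` {1..5}))) powr \<sigma>
                 / (jb (real_of_int k) * jb (real_of_int (\<epsilon> 3 * K 3 + \<epsilon> 4 * K 4)))"
  shows "0 \<le> jb (real_of_int k) powr (1/2) * \<bar>\<beta> k K\<bar> * (C3 ^ 5 * (\<Prod>j\<in>{1..5}. jb (real_of_int (K j)) powr (-1/2)))
    \<and> jb (real_of_int k) powr (1/2) * \<bar>\<beta> k K\<bar> * (C3 ^ 5 * (\<Prod>j\<in>{1..5}. jb (real_of_int (K j)) powr (-1/2)))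
      \<le> (C3 ^ 5 * (A * sqrt c * (sqrt 2 ^ 5) powr \<sigma>)) * Vw \<sigma> \<epsilon> K"
proof
  show "0 \<le> jb (real_of_int k) powr (1/2) * \<bar>\<beta> k K\<bar> * (C3 ^ 5 * (\<Prod>j\<in>{1..5}. jb (real_of_int (K j)) powr (-1/2)))"
    using C3 by (simp add: prod_nonneg)
next
  have V0: "Vw \<sigma> \<epsilon> K \<ge> 0" unfolding Vw_def by simp
  show "jb (real_of_int k) powr (1/2) * \<bar>\<beta> k K\<bar> * (C3 ^ 5 * (\<Prod>j\<in>{1..5}. jb (real_of_int (K j)) powr (-1/2)))
      \<le> (C3 ^ 5 * (A * sqrt c * (sqrt 2 ^ 5) powr \<sigma>)) * Vw \<sigma> \<epsilon> K"
  proof (cases "\<beta> k K = 0")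
    case True thus ?thesis using V0 C3 A0 c0 by simp
  next
    case False
    let ?x = "\<lambda>j. jb (real_of_int (K j))"
    let ?M = "Max ({\<bar>k\<bar>} \<union> (\<lambda>j. \<bar>K j\<bar>) ` {1..5})"
    have x5y: "?x 5 \<le> c * jb (real_of_int k)" using supp False by simp
    have P: "jb (real_of_int ?M) powr \<sigma> \<le> (sqrt 2 ^ 5) powr \<sigma> * (?x 1 * ?x 2 * ?x 3 * ?x 4 * ?x 5) powr \<sigma>"
    proof -
      have "jb (real_of_int ?M) powr \<sigma> \<le> (sqrt 2 ^ 5 * (?x 1 * ?x 2 * ?x 3 * ?x 4 * ?x 5)) powr \<sigma>"
        using Max_jb_bound[OF K eps] s0 by (intro powr_mono2) auto
      thus ?thesis by (simp add: powr_mult)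
    qed
    have main: "jb (real_of_int k) powr (1/2) * \<bar>\<beta> k K\<bar> * (?x 1 powr (-1/2) * (?x 2 powr (-1/2) * (?x 3 powr (-1/2) * (?x 4 powr (-1/2) * ?x 5 powr (-1/2)))))
      \<le> A * sqrt c * (sqrt 2 ^ 5) powr \<sigma> * (?x 5 powr (\<sigma> - 1) * jb (real_of_int (\<epsilon> 3 * K 3 + \<epsilon> 4 * K 4)) powr (-1) *
          (?x 1 powr (\<sigma> - 1/2) * ?x 2 powr (\<sigma> - 1/2) * ?x 3 powr (\<sigma> - 1/2) * ?x 4 powr (\<sigma> - 1/2)))"
      by (rule W_arith[OF jb_pos jb_pos jb_pos jb_pos jb_pos jb_pos jb_pos c0 less_imp_le[OF A0] _ _ bb P x5y]) auto
    have "jb (real_of_int k) powr (1/2) * \<bar>\<beta> k K\<bar> * (C3 ^ 5 * (\<Prod>j\<in>{1..5}. jb (real_of_int (K j)) powr (-1/2)))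
       = C3 ^ 5 * (jb (real_of_int k) powr (1/2) * \<bar>\<beta> k K\<bar> * (?x 1 powr (-1/2) * (?x 2 powr (-1/2) * (?x 3 powr (-1/2) * (?x 4 powr (-1/2) * ?x 5 powr (-1/2))))))"
      unfolding prod5 by (simp add: mult_ac)
    also have "\<dots> \<le> C3 ^ 5 * (A * sqrt c * (sqrt 2 ^ 5) powr \<sigma> * (?x 5 powr (\<sigma> - 1) * jb (real_of_int (\<epsilon> 3 * K 3 + \<epsilon> 4 * K 4)) powr (-1) *
          (?x 1 powr (\<sigma> - 1/2) * ?x 2 powr (\<sigma> - 1/2) * ?x 3 powr (\<sigma> - 1/2) * ?x 4 powr (\<sigma> - 1/2))))"
      using C3 main by (intro mult_left_mono) auto
    also have "\<dots> = (C3 ^ 5 * (A * sqrt c * (sqrt 2 ^ 5) powr \<sigma>)) * Vw \<sigma> \<epsilon> K"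
      unfolding Vw_def by (simp add: mult_ac)
    finally show ?thesis .
  qed
qed

theorem proposition6p8:
  fixes p0 :: real
  assumes "p0 \<ge> 2"
  shows "\<exists>\<delta>0>0. \<forall>\<delta>. 0 < \<delta> \<and> \<delta> < \<delta>0 \<longrightarrow>
    (\<forall>C A c :: real. C > 0 \<and> A > 0 \<and> c > 0 \<longrightarrow>
     (\<exists>C'::real. C' > 0 \<and>
       (\<forall>(\<epsilon>::nat \<Rightarrow> int) R (\<beta>::int \<Rightarrow> (nat \<Rightarrow> int) \<Rightarrow> real).
         (\<forall>j\<in>{1..5}. \<epsilon> j = 1 \<or> \<epsilon> j = -1) \<longrightarrow>
         multilinear5 R \<longrightarrow>
         (\<forall>k K. \<beta> k K \<noteq> 0 \<longrightarrow> jb (real_of_int (K 5)) \<le> c * jb (real_of_int k)) \<longrightarrow>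
         (\<forall>k K. \<bar>\<beta> k K\<bar> \<le> A * jb (real_of_int (Max ({\<bar>k\<bar>} \<union> (\<lambda>j. \<bar>K j\<bar>) ` {1..5}))) powr (sqrt \<delta>)
                 / (jb (real_of_int k) * jb (real_of_int (\<epsilon> 3 * K 3 + \<epsilon> 4 * K 4)))) \<longrightarrow>
         (\<forall>v. (\<forall>j\<in>{1..5}. \<forall>k. v j k \<in> borel_measurable lborel) \<longrightarrow>
            (\<forall>k lam. ennreal (cmod (tilde (R v) k lam)) \<le>
               ennreal (C / jb lam powr (1 + 10 * \<delta>)) *
               (\<integral>\<^sup>+ K. ennreal \<bar>\<beta> k K\<bar> *
                   (\<integral>\<^sup>+ \<Lambda>. (\<Prod>j\<in>{1..5}. ennreal (cmod (tilde (v j) (K j) (\<Lambda> j))))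
                      \<partial>PiM {1..5} (\<lambda>_. lborel))
                 \<partial>count_space {K. (\<forall>j. j \<notin> {1..5} \<longrightarrow> K j = 0) \<and>
                                   (\<Sum>j\<in>{1..5}. \<epsilon> j * K j) = k}))) \<longrightarrow>
         (\<forall>v. (\<forall>j\<in>{1..5}. \<forall>k. v j k \<in> borel_measurable lborel) \<longrightarrow>
            Xnorm (1/2) (1 - \<delta>) p0 (1 / (4 * \<delta>)) (R v)
              \<le> ennreal C' * (\<Prod>j\<in>{1..5}. Xnorm (1/2) (1/2) p0 (1 / (1/2 + \<delta>)) (v j))))))"
proof -
  have p2: "p0 \<ge> 2" by fact
  define \<delta>0 where "\<delta>0 = 1 / (16 * p0\<^sup>2)"
  have d0pos: "\<delta>0 > 0" unfolding \<delta>0_def using p2 by simp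
  show ?thesis
  proof (rule exI[of _ \<delta>0], intro conjI allI impI)
    show "\<delta>0 > 0" by fact
  next
    fix \<delta> C A c :: real
    assume H1: "0 < \<delta> \<and> \<delta> < \<delta>0" and H2: "C > 0 \<and> A > 0 \<and> c > 0"
    have d0: "0 < \<delta>" and dl: "\<delta> < \<delta>0" using H1 by auto
    have C0: "C > 0" and A0: "A > 0" and c0: "c > 0" using H2 by auto
    have p1: "p0 > 1" and pp: "p0 > 0" using p2 by auto
    have dsmall: "\<delta> < 1/64"
    proof -
      have "p0\<^sup>2 \<ge> 2\<^sup>2" using p2 by (intro power_mono) auto
      hence "16 * p0\<^sup>2 \<ge> 64" by simp
      hence "1 / (16 * p0\<^sup>2) \<le> 1 / 64" by (intro divide_left_mono) auto
      hence "\<delta>0 \<le> 1/64" unfolding \<delta>0_def .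
      thus ?thesis using dl by simp
    qed
    define \<sigma> where "\<sigma> = sqrt \<delta>"
    have s0: "0 \<le> \<sigma>" unfolding \<sigma>_def using d0 by simp
    have s_small: "\<sigma> < 1 / (4 * p0)"
    proof -
      have "sqrt \<delta> < sqrt \<delta>0" using dl d0 by (simp add: real_sqrt_less_iff)
      also have "sqrt \<delta>0 = 1 / (4 * p0)"
        unfolding \<delta>0_def using pp by (simp add: real_sqrt_divide real_sqrt_mult power2_eq_square)
      finally show ?thesis unfolding \<sigma>_def .
    qed
    have s1: "\<sigma> \<le> 1"
    proof -
      have "1 / (4 * p0) \<le> 1" using p2 by simp
      thus ?thesis using s_small by simp
    qed
    define q where "q = p0 / (p0 - 1)"
    have pq: "1 / p0 + 1 / q = 1" unfolding q_def using p1 by (simp add: field_simps)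
    have q1: "q > 1" unfolding q_def using p1 by (simp add: field_simps)
    have sq: "(1 - 2 * \<sigma>) * q > 1"
    proof -
      have "2 * \<sigma> * p0 < 1" using s_small pp by (simp add: field_simps)
      hence "(1 - 2 * \<sigma>) * p0 > p0 - 1" by (simp add: algebra_simps)
      thus ?thesis unfolding q_def using p1 by (simp add: field_simps)
    qed
    define J1 where "J1 = (\<integral>\<^sup>+x. ennreal (jb x powr (- ((1 / (1/2 - \<delta>)) / 2))) \<partial>lborel)"
    have J1fin: "J1 < \<top>" unfolding J1_def
    proof (rule lint_finite)
      show "1 / (1/2 - \<delta>) / 2 > 1" using d0 dsmall by (simp add: field_simps)
    qed
    define C3 where "C3 = enn2real J1 powr (1 / (1 / (1/2 - \<delta>)))"
    have C3_0: "C3 \<ge> 0" unfolding C3_def by simp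
    have C3_eq: "epow J1 (1 / (1 / (1/2 - \<delta>))) = ennreal C3"
      unfolding C3_def using J1fin by (cases J1) (auto simp: epow_ennreal)
    define J2 where "J2 = (\<integral>\<^sup>+x. ennreal (jb x powr (- (11/4))) \<partial>lborel)"
    have J2fin: "J2 < \<top>" unfolding J2_def by (rule lint_finite) simp
    define J2r where "J2r = max 1 (enn2real J2)"
    have J21: "J2r \<ge> 1" unfolding J2r_def by simp
    have J2le: "J2 \<le> ennreal J2r"
      unfolding J2r_def using J2fin by (cases J2) (auto simp: ennreal_leI)
    define D where "D = (sqrt 2 ^ 5) powr \<sigma>"
    define A' where "A' = C3 ^ 5 * (A * sqrt c * D)"
    have A'0: "A' \<ge> 0" unfolding A'_def D_def using C3_0 A0 c0 by simp
    define K0 where "K0 = C * J2r powr (4 * \<delta>)"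
    have K00: "K0 \<ge> 0" unfolding K0_def using C0 J21 by simp
    define Mx where "Mx = A' powr p0 * Mnum \<sigma> q powr (p0 / q)"
    have Mx0: "Mx \<ge> 0" unfolding Mx_def by simp
    define C' where "C' = K0 * Mx powr (1 / p0) + 1"
    have C'0: "C' > 0" unfolding C'_def using K00 Mx0 by (simp add: add_nonneg_pos)
    show "(\<exists>C'::real. C' > 0 \<and>
       (\<forall>(\<epsilon>::nat \<Rightarrow> int) R (\<beta>::int \<Rightarrow> (nat \<Rightarrow> int) \<Rightarrow> real).
         (\<forall>j\<in>{1..5}. \<epsilon> j = 1 \<or> \<epsilon> j = -1) \<longrightarrow>
         multilinear5 R \<longrightarrow>
         (\<forall>k K. \<beta> k K \<noteq> 0 \<longrightarrow> jb (real_of_int (K 5)) \<le> c * jb (real_of_int k)) \<longrightarrow>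
         (\<forall>k K. \<bar>\<beta> k K\<bar> \<le> A * jb (real_of_int (Max ({\<bar>k\<bar>} \<union> (\<lambda>j. \<bar>K j\<bar>) ` {1..5}))) powr (sqrt \<delta>)
                 / (jb (real_of_int k) * jb (real_of_int (\<epsilon> 3 * K 3 + \<epsilon> 4 * K 4)))) \<longrightarrow>
         (\<forall>v. (\<forall>j\<in>{1..5}. \<forall>k. v j k \<in> borel_measurable lborel) \<longrightarrow>
            (\<forall>k lam. ennreal (cmod (tilde (R v) k lam)) \<le>
               ennreal (C / jb lam powr (1 + 10 * \<delta>)) *
               (\<integral>\<^sup>+ K. ennreal \<bar>\<beta> k K\<bar> *
                   (\<integral>\<^sup>+ \<Lambda>. (\<Prod>j\<in>{1..5}. ennreal (cmod (tilde (v j) (K j) (\<Lambda> j))))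
                      \<partial>PiM {1..5} (\<lambda>_. lborel))
                 \<partial>count_space {K. (\<forall>j. j \<notin> {1..5} \<longrightarrow> K j = 0) \<and>
                                   (\<Sum>j\<in>{1..5}. \<epsilon> j * K j) = k}))) \<longrightarrow>
         (\<forall>v. (\<forall>j\<in>{1..5}. \<forall>k. v j k \<in> borel_measurable lborel) \<longrightarrow>
            Xnorm (1/2) (1 - \<delta>) p0 (1 / (4 * \<delta>)) (R v)
              \<le> ennreal C' * (\<Prod>j\<in>{1..5}. Xnorm (1/2) (1/2) p0 (1 / (1/2 + \<delta>)) (v j)))))"
    proof (rule exI[of _ C'], rule conjI[OF C'0], intro allI impI)
      fix \<epsilon> :: "nat \<Rightarrow> int" and R :: "(nat \<Rightarrow> int \<Rightarrow> real \<Rightarrow> complex) \<Rightarrow> int \<Rightarrow> real \<Rightarrow> complex" and \<beta> :: "int \<Rightarrow> (nat \<Rightarrow> int) \<Rightarrow> real" and v :: "nat \<Rightarrow> int \<Rightarrow> real \<Rightarrow> complex"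
      assume eps: "\<forall>j\<in>{1..5}. \<epsilon> j = 1 \<or> \<epsilon> j = -1" and ml: "multilinear5 R" and supp: "\<forall>k K. \<beta> k K \<noteq> 0 \<longrightarrow> jb (real_of_int (K 5)) \<le> c * jb (real_of_int k)" and bnd: "(\<forall>k K. \<bar>\<beta> k K\<bar> \<le> A * jb (real_of_int (Max ({\<bar>k\<bar>} \<union> (\<lambda>j. \<bar>K j\<bar>) ` {1..5}))) powr (sqrt \<delta>)
                 / (jb (real_of_int k) * jb (real_of_int (\<epsilon> 3 * K 3 + \<epsilon> 4 * K 4))))"
        and Rhyp: "(\<forall>v. (\<forall>j\<in>{1..5}. \<forall>k. v j k \<in> borel_measurable lborel) \<longrightarrow>
            (\<forall>k lam. ennreal (cmod (tilde (R v) k lam)) \<le>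
               ennreal (C / jb lam powr (1 + 10 * \<delta>)) *
               (\<integral>\<^sup>+ K. ennreal \<bar>\<beta> k K\<bar> *
                   (\<integral>\<^sup>+ \<Lambda>. (\<Prod>j\<in>{1..5}. ennreal (cmod (tilde (v j) (K j) (\<Lambda> j))))
                      \<partial>PiM {1..5} (\<lambda>_. lborel))
                 \<partial>count_space {K. (\<forall>j. j \<notin> {1..5} \<longrightarrow> K j = 0) \<and>
                                   (\<Sum>j\<in>{1..5}. \<epsilon> j * K j) = k})))" and vm: "\<forall>j\<in>{1..5}. \<forall>k. v j k \<in> borel_measurable lborel"
      have vm': "\<And>j k. j \<in> {1..5} \<Longrightarrow> v j k \<in> borel_measurable borel" using vm by simp
      have eps': "\<forall>j\<in>{1..5}. \<epsilon> j \<noteq> 0" using eps by force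
      define L where "L j n = Lqk (1/2) (1/2) (1 / (1/2 + \<delta>)) (v j) n" for j n
      define I where "I j n = (\<integral>\<^sup>+x. ennreal (cmod (tilde (v j) n x)) \<partial>lborel)" for j n
      have S1: "I j n \<le> ennreal (C3 * jb (real_of_int n) powr (-1/2)) * L j n" if j: "j \<in> {1..5}" for j n
      proof -
        have "I j n \<le> ennreal (jb (real_of_int n) powr (-1/2)) * (epow J1 (1 / (1 / (1/2 - \<delta>))) * L j n)"
          unfolding I_def L_def J1_def by (rule L1_bound[OF vm'[OF j] d0]) (use dsmall in simp)
        also have "\<dots> = ennreal (C3 * jb (real_of_int n) powr (-1/2)) * L j n"
          unfolding C3_eq using C3_0 by (simp add: ennreal_mult mult_ac)
        finally show ?thesis .
      qed
      define S where "S k = (\<integral>\<^sup>+K. ennreal \<bar>\<beta> k K\<bar> * (\<Prod>j\<in>{1..5}. I j (K j)) \<partial>count_space (SetK \<epsilon> k))" for k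
      have S2: "ennreal (cmod (tilde (R v) k x)) \<le> ennreal (C / jb x powr (1 + 10 * \<delta>)) * S k" for k x
      proof -
        have "ennreal (cmod (tilde (R v) k x)) \<le> ennreal (C / jb x powr (1 + 10 * \<delta>)) *
           (\<integral>\<^sup>+ K. ennreal \<bar>\<beta> k K\<bar> * (\<integral>\<^sup>+ \<Lambda>. (\<Prod>j\<in>{1..5}. ennreal (cmod (tilde (v j) (K j) (\<Lambda> j)))) \<partial>PiM {1..5} (\<lambda>_. lborel))
             \<partial>count_space (SetK \<epsilon> k))"
        proof -
          have vml: "\<And>j k. j \<in> {1..5} \<Longrightarrow> v j k \<in> borel_measurable lborel" using vm by simp
          show ?thesis using Rhyp[rule_format, of v k x, OF vml] unfolding SetK_def .
        qed
        also have "(\<integral>\<^sup>+ K. ennreal \<bar>\<beta> k K\<bar> * (\<integral>\<^sup>+ \<Lambda>. (\<Prod>j\<in>{1..5}. ennreal (cmod (tilde (v j) (K j) (\<Lambda> j)))) \<partial>PiM {1..5} (\<lambda>_. lborel))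
             \<partial>count_space (SetK \<epsilon> k)) = S k"
          unfolding S_def I_def
        proof (intro nn_integral_cong)
          fix K :: "nat \<Rightarrow> int"
          have "(\<integral>\<^sup>+ \<Lambda>. (\<Prod>j\<in>{1..5}. ennreal (cmod (tilde (v j) (K j) (\<Lambda> j)))) \<partial>PiM {1..5} (\<lambda>_. lborel))
             = (\<Prod>j\<in>{1..5}. \<integral>\<^sup>+x. ennreal (cmod (tilde (v j) (K j) x)) \<partial>lborel)"
            by (rule PiM_prod5) (rule vm')
          thus "ennreal \<bar>\<beta> k K\<bar> * (\<integral>\<^sup>+ \<Lambda>. (\<Prod>j\<in>{1..5}. ennreal (cmod (tilde (v j) (K j) (\<Lambda> j)))) \<partial>PiM {1..5} (\<lambda>_. lborel))
             = ennreal \<bar>\<beta> k K\<bar> * (\<Prod>j\<in>{1..5}. \<integral>\<^sup>+x. ennreal (cmod (tilde (v j) (K j) x)) \<partial>lborel)" by simp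
        qed
        finally show ?thesis .
      qed
      have S4: "Lqk (1/2) (1 - \<delta>) (1 / (4 * \<delta>)) (R v) k \<le> ennreal (jb (real_of_int k) powr (1/2) * C * J2r powr (4 * \<delta>)) * S k" for k
        by (rule Lqk_R_bound[OF d0 C0 S2 _ J21]) (use J2le in \<open>simp add: J2_def\<close>)
      define N where "N j = Xnorm (1/2) (1/2) p0 (1 / (1/2 + \<delta>)) (v j)" for j
      have N_def': "N j = epow (\<integral>\<^sup>+n. epow (L j n) p0 \<partial>count_space UNIV) (1/p0)" for j
        unfolding N_def L_def Xnorm_def by simp
      have LHS: "Xnorm (1/2) (1 - \<delta>) p0 (1 / (4 * \<delta>)) (R v) =
          epow (\<integral>\<^sup>+k. epow (Lqk (1/2) (1 - \<delta>) (1 / (4 * \<delta>)) (R v) k) p0 \<partial>count_space UNIV) (1/p0)"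
        unfolding Xnorm_def ..
      have "Xnorm (1/2) (1 - \<delta>) p0 (1 / (4 * \<delta>)) (R v) \<le> ennreal C' * (\<Prod>j\<in>{1..5}. N j)"
      proof (cases "\<exists>j\<in>{1..5}. N j = 0")
        case True
        then obtain j0 where j0: "j0 \<in> {1..5}" "N j0 = 0" by blast
        have sum0: "(\<integral>\<^sup>+n. epow (L j0 n) p0 \<partial>count_space UNIV) = 0"
          using j0 unfolding N_def' by (simp add: epow_eq_0_iff)
        have L0: "L j0 n = 0" for n
        proof -
          have "epow (L j0 n) p0 \<le> 0" using point_le_sum[of "\<lambda>n. epow (L j0 n) p0" n] sum0 by simp
          thus "L j0 n = 0" by (simp add: epow_eq_0_iff)
        qed
        have I0: "I j0 n = 0" for n using S1[OF j0(1), of n] L0 by simp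
        have S0: "S k = 0" for k
        proof -
          have pz: "(\<Prod>j\<in>{1..5}. I j (K j)) = 0" for K
            using I0 j0(1) by (subst ennreal_prod_eq_0) (auto intro!: bexI[of _ j0])
          have "S k = (\<integral>\<^sup>+K. 0 \<partial>count_space (SetK \<epsilon> k))"
            unfolding S_def by (intro nn_integral_cong) (simp only: pz mult_zero_right)
          thus "S k = 0" by simp
        qed
        have "Lqk (1/2) (1 - \<delta>) (1 / (4 * \<delta>)) (R v) k = 0" for k
          using S4[of k] S0[of k] by simp
        hence "Xnorm (1/2) (1 - \<delta>) p0 (1 / (4 * \<delta>)) (R v) = 0" unfolding LHS by simp
        thus ?thesis by simp
      next
        case False
        hence Nn0: "N j \<noteq> 0" if "j \<in> {1..5}" for j using that by blast
        show ?thesis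
        proof (cases "\<exists>j\<in>{1..5}. N j = \<top>")
          case True
          have "(\<Prod>j\<in>{1..5}. N j) = \<top>" using True Nn0 by (subst ennreal_prod_eq_top) auto
          hence "ennreal C' * (\<Prod>j\<in>{1..5}. N j) = \<top>" using C'0 by (simp add: ennreal_mult_top)
          thus ?thesis by simp
        next
          case False
          hence Nt: "N j \<noteq> \<top>" if "j \<in> {1..5}" for j using that by blast
          have Lfin: "L j n \<noteq> \<top>" if j: "j \<in> {1..5}" for j n
          proof
            assume Lt: "L j n = \<top>"
            have "\<top> \<le> (\<integral>\<^sup>+n. epow (L j n) p0 \<partial>count_space UNIV)"
              using point_le_sum[of "\<lambda>n. epow (L j n) p0" n] Lt by simp
            hence "N j = \<top>" unfolding N_def' by (simp add: top_unique)
            with Nt[OF j] show False by simp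
          qed
          define b where "b j n = enn2real (L j n)" for j n
          have b0: "0 \<le> b j n" for j n unfolding b_def by simp
          have Lb: "L j n = ennreal (b j n)" if "j \<in> {1..5}" for j n
            unfolding b_def using Lfin[OF that, of n] by (simp add: less_top)
          define W where "W k K = jb (real_of_int k) powr (1/2) * \<bar>\<beta> k K\<bar> *
              (C3 ^ 5 * (\<Prod>j\<in>{1..5}. jb (real_of_int (K j)) powr (-1/2)))" for k K
          define T where "T k = (\<integral>\<^sup>+K. ennreal (W k K * (\<Prod>j\<in>{1..5}. b j (K j))) \<partial>count_space (SetK \<epsilon> k))" for k
          have LT: "Lqk (1/2) (1 - \<delta>) (1 / (4 * \<delta>)) (R v) k \<le> ennreal K0 * T k" for k
          proof -
            have pj: "(\<Prod>j\<in>{1..5}. I j (K j)) \<le> (\<Prod>j\<in>{1..5}. ennreal (C3 * jb (real_of_int (K j)) powr (-1/2)) * ennreal (b j (K j)))" for K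
            proof (rule prod_mono_ennreal)
              fix j assume j: "j \<in> {1..5::nat}"
              show "I j (K j) \<le> ennreal (C3 * jb (real_of_int (K j)) powr (-1/2)) * ennreal (b j (K j))"
                using S1[OF j, of "K j"] Lb[OF j, of "K j"] by simp
            qed
            have "ennreal (jb (real_of_int k) powr (1/2)) * S k \<le>
                ennreal (jb (real_of_int k) powr (1/2)) * (\<integral>\<^sup>+K. ennreal \<bar>\<beta> k K\<bar> *
                  (\<Prod>j\<in>{1..5}. ennreal (C3 * jb (real_of_int (K j)) powr (-1/2)) * ennreal (b j (K j))) \<partial>count_space (SetK \<epsilon> k))"
              unfolding S_def by (intro mult_left_mono nn_integral_mono pj) auto
            also have "\<dots> = T k"
              unfolding T_def
            proof (subst nn_integral_cmult[symmetric], simp, intro nn_integral_cong)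
              fix K :: "nat \<Rightarrow> int"
              show "ennreal (jb (real_of_int k) powr (1/2)) * (ennreal \<bar>\<beta> k K\<bar> *
                  (\<Prod>j\<in>{1..5}. ennreal (C3 * jb (real_of_int (K j)) powr (-1/2)) * ennreal (b j (K j))))
                  = ennreal (W k K * (\<Prod>j\<in>{1..5}. b j (K j)))"
              proof -
                have c5: "C3 ^ 5 = C3 * (C3 * (C3 * (C3 * C3)))" by (simp add: eval_nat_numeral)
                show ?thesis unfolding W_def prod5 c5 using C3_0 b0
                  by (simp add: ennreal_mult[symmetric] mult_ac)
              qed
            qed
            finally have ST: "ennreal (jb (real_of_int k) powr (1/2)) * S k \<le> T k" .
            have "Lqk (1/2) (1 - \<delta>) (1 / (4 * \<delta>)) (R v) k \<le> ennreal (jb (real_of_int k) powr (1/2) * C * J2r powr (4 * \<delta>)) * S k"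
              by (rule S4)
            also have "\<dots> = ennreal K0 * (ennreal (jb (real_of_int k) powr (1/2)) * S k)"
              unfolding K0_def using C0 J21 by (simp add: ennreal_mult[symmetric] mult_ac)
            also have "\<dots> \<le> ennreal K0 * T k" using ST by (intro mult_left_mono) auto
            finally show ?thesis .
          qed
          have Wb: "0 \<le> W k K \<and> W k K \<le> A' * Vw \<sigma> \<epsilon> K" if "K \<in> SetK \<epsilon> k" for k K
            unfolding W_def A'_def D_def \<sigma>_def
            by (rule W_bound[OF that eps c0 A0 _ C3_0]) (use supp bnd d0 in auto)
          have DM: "(\<integral>\<^sup>+k. epow (T k) p0 \<partial>count_space UNIV) \<le> ennreal Mx * (\<Prod>j\<in>{1..5}. \<integral>\<^sup>+n. ennreal (b j n powr p0) \<partial>count_space UNIV)"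
            unfolding T_def Mx_def
            by (rule discrete_main[OF p1 pq s0 sq eps' A'0 Wb b0])
          have prodeq: "(\<Prod>j\<in>{1..5}. \<integral>\<^sup>+n. ennreal (b j n powr p0) \<partial>count_space UNIV) = (\<Prod>j\<in>{1..5}. \<integral>\<^sup>+n. epow (L j n) p0 \<partial>count_space UNIV)"
          proof (intro prod.cong refl nn_integral_cong)
            fix j n assume j: "j \<in> {1..5::nat}"
            show "ennreal (b j n powr p0) = epow (L j n) p0" using Lb[OF j, of n] b0[of j n] by (simp add: epow_ennreal)
          qed
          have "Xnorm (1/2) (1 - \<delta>) p0 (1 / (4 * \<delta>)) (R v) \<le> epow (\<integral>\<^sup>+k. epow (ennreal K0 * T k) p0 \<partial>count_space UNIV) (1/p0)"
            unfolding LHS using pp by (intro epow_mono nn_integral_mono LT) auto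
          also have "\<dots> = epow (ennreal (K0 powr p0) * (\<integral>\<^sup>+k. epow (T k) p0 \<partial>count_space UNIV)) (1/p0)"
            using K00 pp by (simp add: epow_ennreal_mult nn_integral_cmult)
          also have "\<dots> \<le> epow (ennreal (K0 powr p0) * (ennreal Mx * (\<Prod>j\<in>{1..5}. \<integral>\<^sup>+n. epow (L j n) p0 \<partial>count_space UNIV))) (1/p0)"
            using pp DM unfolding prodeq by (intro epow_mono mult_left_mono) auto
          also have "\<dots> = ennreal K0 * (ennreal (Mx powr (1/p0)) * (\<Prod>j\<in>{1..5}. N j))"
          proof -
            have e1: "epow (ennreal (K0 powr p0)) (1 / p0) = ennreal K0"
              using K00 pp by (simp add: epow_ennreal powr_powr)
            have e2: "epow (ennreal Mx) (1 / p0) = ennreal (Mx powr (1/p0))"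
              using Mx0 by (simp add: epow_ennreal)
            show ?thesis using pp by (simp add: epow_mult epow_prod N_def' e1 e2)
          qed
          also have "\<dots> = ennreal (K0 * Mx powr (1/p0)) * (\<Prod>j\<in>{1..5}. N j)"
            using K00 by (simp add: ennreal_mult mult_ac)
          also have "\<dots> \<le> ennreal C' * (\<Prod>j\<in>{1..5}. N j)"
            unfolding C'_def by (intro mult_right_mono ennreal_leI) auto
          finally show ?thesis .
        qed
      qed
      thus "Xnorm (1/2) (1 - \<delta>) p0 (1 / (4 * \<delta>)) (R v)
              \<le> ennreal C' * (\<Prod>j\<in>{1..5}. Xnorm (1/2) (1/2) p0 (1 / (1/2 + \<delta>)) (v j))" unfolding N_def .
    qed
  qed
qed

end
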